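(* Consider the linear equation $u_t+u_x=0$ on $\Omega=[a,b]$ with periodic (or compactly supported) boundary conditions, with square entropy $U(u)=u^2/2$, and suppose the exact solution $u$ is smooth on $\Omega\times[0,T]$. Let $u_h$ be the solution of the semi-discrete NOES-DG scheme described in the context, with initial data the $L^2$ projection of $u_0=u(\cdot,0)$ onto $V_h^k$, i.e. $\int_{K_i}u_h(x,0)\phi(x)\,\mathrm dx=\int_{K_i}u_0(x)\phi(x)\,\mathrm dx$ for all cells $K_i$ and all $\phi\in V_h^k$. Then there is a constant $M$ independent of $h$ such that for $t\in[0,T]$, $$\|u(\cdot,t)-u_h(\cdot,t)\|_{L^2(\Omega)}\le M h^{k+1}.$$
   Context: Mesh: $a=x_{1/2}<\dots<x_{N+1/2}=b$, uniform, cells $K_i=[x_{i-1/2},x_{i+1/2}]$, $h=x_{i+1/2}-x_{i-1/2}$, midpoint $x_i$. For $k\ge1$, $V_h^k=\{w: w|_{K_i}\in P^k(K_i)\ \forall i\}$. Traces $w^\mp_{i+1/2}$ at $x_{i+1/2}$ from $K_i$ / $K_{i+1}$, jump $[\![w]\!]_{i+1/2}=w^+_{i+1/2}-w^-_{i+1/2}$; periodic indices modulo $N$. Here $f(u)=u$, $U=u^2/2$, so the entropy variable is $v(u)=u$, $A(u)=1/U''(u)=1$, entropy flux $F(u)=u^2/2$, and the Gauss–Lobatto interpolant $v_h$ of $v(u_h)$ equals $u_h$. Numerical flux: local Lax–Friedrichs $\hat f(u^-,u^+)=\tfrac12(u^++u^-)-\tfrac12(u^+-u^-)$ (i.e. $\hat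 f=u^-$) with splitting $\hat f^C=\tfrac12(u^++u^-)$, $\hat f^D=-\tfrac12(u^+-u^-)$; numerical entropy flux $\hat F(u^-,u^+)=\tfrac12(F(u^+)+F(u^-))$. NOES-DG scheme: for all $w\in V_h^k$ and all $i$, $$\int_{K_i}\partial_t u_h\,w\,\mathrm dx=\int_{K_i}u_h\,\partial_x w\,\mathrm dx-\hat f_{i+1/2}w^-_{i+1/2}+\hat f_{i-1/2}w^+_{i-1/2}-\sigma_i\int_{K_i}\nu_i\,\partial_x u_h\,\partial_x w\,\mathrm dx,$$ with $\hat f_{i+1/2}=\hat f(u_h|^-_{i+1/2},u_h|^+_{i+1/2})$, $\nu_i(x)=1-\big(\tfrac{x-x_i}{h/2}\big)^2$, and $\sigma_i=\max\{\sigma_i^{jump},\sigma_i^{entropy}\}$, where $\sigma_i^{jump}=c_0\big(h\|[\![u_h]\!]\|_{\partial K_i}+\sum_{l=1}^k l(l+1)h^{l+1}\|[\![\partial_x^l u_h]\!]\|_{\partial K_i}\big)$ with $\|[\![\partial_x^lu_h]\!]\|_{\partial K_i}=|[\![\partial_x^lu_h]\!]_{i-1/2}|+|[\![\partial_x^lu_h]\!]_{i+1/2}|$ and a constant $c_0>0$; $\sigma_i^{entropy}=\min\{\max\{F_i/E_i,0\},C\sigma_i^{jump}\}$ with a constant $C>1$, $E_i=\int_{K_i}\nu_i(\partial_xu_h)^2\,\mathrm dx$, $F_i=\hat F_{i+1/2}-\hat F_{i-1/2}-\hat f^C_{i+1/2}u_h|^-_{i+1/2}+\hat f^C_{i-1/2}u_h|^+_{i-1/2}+\int_{K_i}u_h\partial_xu_h\,\mathrm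 dx$. *)

theory Defs
  imports "HOL-Analysis.Analysis" "HOL-Computational_Algebra.Polynomial"
begin

definition Dx :: "(real \<Rightarrow> real \<Rightarrow> real) \<Rightarrow> real \<Rightarrow> real \<Rightarrow> real" where
  "Dx f x t = deriv (\<lambda>y. f y t) x"

definition Dt :: "(real \<Rightarrow> real \<Rightarrow> real) \<Rightarrow> real \<Rightarrow> real \<Rightarrow> real" where
  "Dt f x t = deriv (\<lambda>s. f x s) t"

fun pderivs :: "bool list \<Rightarrow> (real \<Rightarrow> real \<Rightarrow> real) \<Rightarrow> (real \<Rightarrow> real \<Rightarrow> real)" where
  "pderivs [] f = f"
| "pderivs (d # ds) f = (if d then Dx else Dt) (pderivs ds f)"

definition smooth2 :: "(real \<Rightarrow> real \<Rightarrow> real) \<Rightarrow> bool" where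
  "smooth2 f \<longleftrightarrow> (\<forall>ds p. (\<lambda>q::real \<times> real. pderivs ds f (fst q) (snd q)) differentiable (at p))"

section \<open>Mesh (cells indexed 0..N-1, periodic)\<close>

definition hh :: "real \<Rightarrow> real \<Rightarrow> nat \<Rightarrow> real" where
  "hh a b N = (b - a) / real N"

definition xL :: "real \<Rightarrow> real \<Rightarrow> nat \<Rightarrow> nat \<Rightarrow> real" where
  "xL a b N i = a + real i * hh a b N"

definition xR :: "real \<Rightarrow> real \<Rightarrow> nat \<Rightarrow> nat \<Rightarrow> real" where
  "xR a b N i = a + real (Suc i) * hh a b N"

definition xM :: "real \<Rightarrow> real \<Rightarrow> nat \<Rightarrow> nat \<Rightarrow> real" where
  "xM a b N i = a + (real i + 1/2) * hh a b N"

definition nxt :: "nat \<Rightarrow> nat \<Rightarrow> nat" where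
  "nxt N i = Suc i mod N"

definition prv :: "nat \<Rightarrow> nat \<Rightarrow> nat" where
  "prv N i = (i + N - 1) mod N"

definition nu :: "real \<Rightarrow> real \<Rightarrow> nat \<Rightarrow> nat \<Rightarrow> real \<Rightarrow> real" where
  "nu a b N i x = 1 - ((x - xM a b N i) / (hh a b N / 2))\<^sup>2"

text \<open>A discrete state U assigns to every cell i a polynomial U i (the restriction of u_h to K_i).
  Interface j is the right end x_{j+1/2} of cell j; its right neighbour is cell nxt N j.\<close>

definition tr_m :: "real \<Rightarrow> real \<Rightarrow> nat \<Rightarrow> (nat \<Rightarrow> real poly) \<Rightarrow> nat \<Rightarrow> real" where
  "tr_m a b N U j = poly (U j) (xR a b N j)"

definition tr_p :: "real \<Rightarrow> real \<Rightarrow> nat \<Rightarrow> (nat \<Rightarrow> real poly) \<Rightarrow> nat \<Rightarrow> real" where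
  "tr_p a b N U j = poly (U (nxt N j)) (xL a b N (nxt N j))"

definition jmp :: "real \<Rightarrow> real \<Rightarrow> nat \<Rightarrow> (nat \<Rightarrow> real poly) \<Rightarrow> nat \<Rightarrow> nat \<Rightarrow> real" where
  "jmp a b N U l j = poly ((pderiv ^^ l) (U (nxt N j))) (xL a b N (nxt N j))
                   - poly ((pderiv ^^ l) (U j)) (xR a b N j)"

definition jnorm :: "real \<Rightarrow> real \<Rightarrow> nat \<Rightarrow> (nat \<Rightarrow> real poly) \<Rightarrow> nat \<Rightarrow> nat \<Rightarrow> real" where
  "jnorm a b N U l i = \<bar>jmp a b N U l (prv N i)\<bar> + \<bar>jmp a b N U l i\<bar>"

definition sigma_jump :: "real \<Rightarrow> nat \<Rightarrow> real \<Rightarrow> real \<Rightarrow> nat \<Rightarrow> (nat \<Rightarrow> real poly) \<Rightarrow> nat \<Rightarrow> real" where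
  "sigma_jump c0 k a b N U i =
     c0 * (hh a b N * jnorm a b N U 0 i
           + (\<Sum>l=1..k. real l * real (l + 1) * hh a b N ^ (l + 1) * jnorm a b N U l i))"

text \<open>Fluxes for f(u)=u: LLF flux (= upwind value u^-), central part, entropy flux.\<close>
definition fhat :: "real \<Rightarrow> real \<Rightarrow> nat \<Rightarrow> (nat \<Rightarrow> real poly) \<Rightarrow> nat \<Rightarrow> real" where
  "fhat a b N U j = (tr_p a b N U j + tr_m a b N U j) / 2 - (tr_p a b N U j - tr_m a b N U j) / 2"

definition fC :: "real \<Rightarrow> real \<Rightarrow> nat \<Rightarrow> (nat \<Rightarrow> real poly) \<Rightarrow> nat \<Rightarrow> real" where
  "fC a b N U j = (tr_p a b N U j + tr_m a b N U j) / 2"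

definition Fhat :: "real \<Rightarrow> real \<Rightarrow> nat \<Rightarrow> (nat \<Rightarrow> real poly) \<Rightarrow> nat \<Rightarrow> real" where
  "Fhat a b N U j = ((tr_p a b N U j)\<^sup>2 / 2 + (tr_m a b N U j)\<^sup>2 / 2) / 2"

definition Ecell :: "real \<Rightarrow> real \<Rightarrow> nat \<Rightarrow> (nat \<Rightarrow> real poly) \<Rightarrow> nat \<Rightarrow> real" where
  "Ecell a b N U i = integral {xL a b N i .. xR a b N i}
      (\<lambda>x. nu a b N i x * (poly (pderiv (U i)) x)\<^sup>2)"

definition Fcell :: "real \<Rightarrow> real \<Rightarrow> nat \<Rightarrow> (nat \<Rightarrow> real poly) \<Rightarrow> nat \<Rightarrow> real" where
  "Fcell a b N U i = Fhat a b N U i - Fhat a b N U (prv N i)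
      - fC a b N U i * tr_m a b N U i + fC a b N U (prv N i) * tr_p a b N U (prv N i)
      + integral {xL a b N i .. xR a b N i} (\<lambda>x. poly (U i) x * poly (pderiv (U i)) x)"

definition sigma_ent :: "real \<Rightarrow> real \<Rightarrow> nat \<Rightarrow> real \<Rightarrow> real \<Rightarrow> nat \<Rightarrow> (nat \<Rightarrow> real poly) \<Rightarrow> nat \<Rightarrow> real" where
  "sigma_ent c0 C k a b N U i =
     min (max (Fcell a b N U i / Ecell a b N U i) 0) (C * sigma_jump c0 k a b N U i)"

definition sigma :: "real \<Rightarrow> real \<Rightarrow> nat \<Rightarrow> real \<Rightarrow> real \<Rightarrow> nat \<Rightarrow> (nat \<Rightarrow> real poly) \<Rightarrow> nat \<Rightarrow> real" where
  "sigma c0 C k a b N U i = max (sigma_jump c0 k a b N U i) (sigma_ent c0 C k a b N U i)"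

text \<open>The NOES-DG cell equation on cell i, for state U with time derivative Ut, tested with
  the polynomial w (= restriction of the test function to K_i).\<close>
definition noes_eq :: "real \<Rightarrow> real \<Rightarrow> nat \<Rightarrow> real \<Rightarrow> real \<Rightarrow> nat \<Rightarrow> (nat \<Rightarrow> real poly) \<Rightarrow> (nat \<Rightarrow> real poly)
     \<Rightarrow> nat \<Rightarrow> real poly \<Rightarrow> bool" where
  "noes_eq c0 C k a b N U Ut i w \<longleftrightarrow>
     integral {xL a b N i .. xR a b N i} (\<lambda>x. poly (Ut i) x * poly w x)
     = integral {xL a b N i .. xR a b N i} (\<lambda>x. poly (U i) x * poly (pderiv w) x)
       - fhat a b N U i * poly w (xR a b N i)
       + fhat a b N U (prv N i) * poly w (xL a b N i)
       - sigma c0 C k a b N U i *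
           integral {xL a b N i .. xR a b N i}
             (\<lambda>x. nu a b N i x * poly (pderiv (U i)) x * poly (pderiv w) x)"

definition l2err :: "real \<Rightarrow> real \<Rightarrow> nat \<Rightarrow> (real \<Rightarrow> real) \<Rightarrow> (nat \<Rightarrow> real poly) \<Rightarrow> real" where
  "l2err a b N v U = sqrt (\<Sum>i<N. integral {xL a b N i .. xR a b N i} (\<lambda>x. (v x - poly (U i) x)\<^sup>2))"

end

theory Submission
  imports Defs
begin

lemma cov:
  fixes F :: "real \<Rightarrow> real"
  assumes h: "0 < h" and c: "continuous_on {al..al + h} F"
  shows "integral {al..al + h} F = h * integral {0..1} (\<lambda>s. F (al + h * s))"
proof -
  have "(F has_integral integral {al..al + h} F) (cbox al (al + h))"
    using integrable_continuous_interval[OF c] by (simp add: has_integral_integral)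
  from has_integral_affinity'[OF this h, of al]
  have "((\<lambda>x. F (h * x + al)) has_integral integral {al..al + h} F / h) {0..1}"
    using h by (simp add: divide_simps)
  hence "integral {0..1} (\<lambda>x. F (h * x + al)) = integral {al..al + h} F / h"
    by (simp add: integral_unique)
  thus ?thesis using h by (simp add: field_simps add.commute)
qed

definition ip :: "real poly \<Rightarrow> real poly \<Rightarrow> real" where
  "ip p q = integral {0..1} (\<lambda>s. poly p s * poly q s)"

lemma pint: "(\<lambda>s. poly p s * poly q s) integrable_on {0..(1::real)}"
  by (intro integrable_continuous_interval continuous_intros)

lemma ip_sym: "ip p q = ip q p"
  unfolding ip_def by (simp add: mult.commute)

lemma ip_add: "ip (p + q) r = ip p r + ip q r"
  unfolding ip_def by (simp add: distrib_right integral_add[OF pint pint])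

lemma ip_diff: "ip (p - q) r = ip p r - ip q r"
  unfolding ip_def by (simp add: left_diff_distrib integral_diff[OF pint pint])

lemma ip_smult: "ip (smult c p) r = c * ip p r"
  unfolding ip_def by (simp add: mult.assoc)

lemma ip_zero[simp]: "ip 0 r = 0"
  unfolding ip_def by simp

lemma ip_sum: "ip (\<Sum>j\<in>A. f j) r = (\<Sum>j\<in>A. ip (f j) r)"
  by (induction A rule: infinite_finite_induct) (auto simp: ip_add)

lemma ip_nonneg: "0 \<le> ip p p"
  unfolding ip_def by (rule integral_nonneg[OF pint]) simp

lemma poly_zero_Ioo:
  fixes q :: "real poly"
  assumes "\<And>x. 0 < x \<Longrightarrow> x < 1 \<Longrightarrow> poly q x = 0"
  shows "q = 0"
proof (rule ccontr)
  assume "q \<noteq> 0"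
  hence "finite {x. poly q x = 0}" by (rule poly_roots_finite)
  moreover have "{0<..<(1::real)} \<subseteq> {x. poly q x = 0}" using assms by auto
  ultimately have "finite {0<..<(1::real)}" by (rule finite_subset[rotated])
  thus False using infinite_Ioo[of "0::real" 1] by simp
qed

lemma int01_zero:
  fixes f :: "real \<Rightarrow> real"
  assumes c: "continuous_on {0..1} f" and nn: "\<And>x. 0 \<le> x \<Longrightarrow> x \<le> 1 \<Longrightarrow> 0 \<le> f x"
    and i: "integral {0..1} f = 0" and x: "0 \<le> x" "x \<le> 1"
  shows "f x = 0"
proof -
  have "(f has_integral 0) (cbox 0 1)"
    using integrable_continuous_interval[OF c] i by (metis box_real(2) has_integral_integral)
  from has_integral_0_cbox_imp_0[OF _ _ this, of x] c nn x show ?thesis by auto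
qed

lemma ip_pos: assumes "p \<noteq> 0" shows "0 < ip p p"
proof -
  have "ip p p \<noteq> 0"
  proof
    assume z: "ip p p = 0"
    have "\<And>x. 0 < x \<Longrightarrow> x < 1 \<Longrightarrow> poly p x * poly p x = 0"
      by (rule int01_zero[where f="\<lambda>s. poly p s * poly p s"])
         (use z in \<open>auto simp: ip_def intro!: continuous_intros\<close>)
    hence "p = 0" by (intro poly_zero_Ioo) auto
    with assms show False by simp
  qed
  with ip_nonneg[of p] show ?thesis by simp
qed

fun GS :: "nat \<Rightarrow> real poly" where
  "GS n = monom 1 n - (\<Sum>j<n. smult (ip (monom 1 n) (GS j) / ip (GS j) (GS j)) (GS j))"

declare GS.simps[simp del]

lemma GS_deg: "degree (GS n) = n \<and> coeff (GS n) n = 1"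
proof (induction n rule: less_induct)
  case (less n)
  let ?S = "(\<Sum>j<n. smult (ip (monom 1 n) (GS j) / ip (GS j) (GS j)) (GS j))"
  have c: "coeff ?S n = 0"
  proof (cases "n = 0")
    case False
    have "degree ?S < n"
      by (rule degree_sum_less) (use less False in auto)
    thus ?thesis by (simp add: coeff_eq_0)
  qed simp
  have d: "degree ?S \<le> n"
    by (rule degree_sum_le) (use less in \<open>auto simp: less_imp_le\<close>)
  have e: "GS n = monom 1 n - ?S" by (rule GS.simps)
  have cn: "coeff (GS n) n = 1" using c e by simp
  have "degree (GS n) \<le> n" unfolding e
    by (rule degree_diff_le) (use d in \<open>auto simp: degree_monom_le\<close>)
  moreover have "n \<le> degree (GS n)" using cn by (intro le_degree) simp
  ultimately show ?case using cn by simp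
qed

lemma GS_nz: "GS n \<noteq> 0"
  using GS_deg[of n] by auto

lemma GS_pos: "0 < ip (GS n) (GS n)"
  by (rule ip_pos[OF GS_nz])

lemma GS_orth: "m < n \<Longrightarrow> ip (GS n) (GS m) = 0"
proof (induction n arbitrary: m rule: less_induct)
  case (less n)
  have o: "ip (GS j) (GS m) = 0" if "j < n" "j \<noteq> m" for j
  proof (cases "m < j")
    case True thus ?thesis using less.IH that by blast
  next
    case False
    hence "j < m" using that by simp
    thus ?thesis using less.IH[of m j] less.prems by (simp add: ip_sym)
  qed
  have "ip (GS n) (GS m) = ip (monom 1 n) (GS m)
        - (\<Sum>j<n. (ip (monom 1 n) (GS j) / ip (GS j) (GS j)) * ip (GS j) (GS m))"
  proof -
    have e: "GS n = monom 1 n - (\<Sum>j<n. smult (ip (monom 1 n) (GS j) / ip (GS j) (GS j)) (GS j))"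
      by (rule GS.simps)
    show ?thesis by (simp only: e ip_diff ip_sum ip_smult)
  qed
  also have "(\<Sum>j<n. (ip (monom 1 n) (GS j) / ip (GS j) (GS j)) * ip (GS j) (GS m))
       = (\<Sum>j\<in>{m}. (ip (monom 1 n) (GS j) / ip (GS j) (GS j)) * ip (GS j) (GS m))"
    by (rule sum.mono_neutral_right) (use less.prems o in auto)
  also have "\<dots> = ip (monom 1 n) (GS m)" using GS_pos[of m] by simp
  finally show ?case by simp
qed


lemma GS_span: "degree p \<le> k \<Longrightarrow> \<exists>\<beta>. p = (\<Sum>m\<le>k. smult (\<beta> m) (GS m))"
proof (induction k arbitrary: p)
  case 0
  then obtain c where "p = [:c:]" by (metis degree_eq_zeroE le_zero_eq)
  moreover have "GS 0 = 1" by (subst GS.simps) (simp add: monom_0 one_pCons)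
  ultimately show ?case by (intro exI[of _ "\<lambda>_. c"]) (simp add: one_pCons)
next
  case (Suc k)
  define q where "q = p - smult (coeff p (Suc k)) (GS (Suc k))"
  have "degree q \<le> Suc k" unfolding q_def
    by (rule degree_diff_le) (use Suc.prems GS_deg[of "Suc k"] in auto)
  moreover have "coeff q (Suc k) = 0" unfolding q_def using GS_deg[of "Suc k"] by simp
  ultimately have "degree q \<le> k"
    by (metis eq_zero_or_degree_less leading_coeff_0_iff less_Suc_eq_le not_less_eq_eq le_antisym
              degree_0 zero_le)
  then obtain \<beta> where b: "q = (\<Sum>m\<le>k. smult (\<beta> m) (GS m))" using Suc.IH by blast
  show ?case
  proof (intro exI[of _ "\<beta>(Suc k := coeff p (Suc k))"])
    have "(\<Sum>m\<le>Suc k. smult ((\<beta>(Suc k := coeff p (Suc k))) m) (GS m))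
        = (\<Sum>m\<le>k. smult (\<beta> m) (GS m)) + smult (coeff p (Suc k)) (GS (Suc k))"
      by (simp add: sum.atMost_Suc)
    also have "\<dots> = p" using b q_def by simp
    finally show "p = (\<Sum>m\<le>Suc k. smult ((\<beta>(Suc k := coeff p (Suc k))) m) (GS m))" by simp
  qed
qed

lemma ip_GS_comb: assumes "j \<le> k"
  shows "ip (\<Sum>m\<le>k. smult (\<beta> m) (GS m)) (GS j) = \<beta> j * ip (GS j) (GS j)"
proof -
  have "ip (\<Sum>m\<le>k. smult (\<beta> m) (GS m)) (GS j) = (\<Sum>m\<le>k. \<beta> m * ip (GS m) (GS j))"
    by (simp add: ip_sum ip_smult)
  also have "\<dots> = (\<Sum>m\<in>{j}. \<beta> m * ip (GS m) (GS j))"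
  proof (rule sum.mono_neutral_right)
    show "\<forall>i\<in>{..k} - {j}. \<beta> i * ip (GS i) (GS j) = 0"
    proof
      fix i assume "i \<in> {..k} - {j}"
      hence "i < j \<or> j < i" by auto
      thus "\<beta> i * ip (GS i) (GS j) = 0" using GS_orth[of i j] GS_orth[of j i] by (auto simp: ip_sym)
    qed
  qed (use assms in auto)
  finally show ?thesis by simp
qed

definition gam :: "nat \<Rightarrow> real" where "gam m = ip (GS m) (GS m)"

lemma gam_pos: "0 < gam m" unfolding gam_def by (rule GS_pos)

lemma GS_expand: assumes "degree p \<le> k"
  shows "p = (\<Sum>m\<le>k. smult (ip p (GS m) / gam m) (GS m))"
proof -
  obtain \<beta> where b: "p = (\<Sum>m\<le>k. smult (\<beta> m) (GS m))" using GS_span[OF assms] by blast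
  have "ip p (GS m) / gam m = \<beta> m" if "m \<le> k" for m
    using ip_GS_comb[OF that, of \<beta>] b gam_pos[of m] unfolding gam_def by simp
  hence "(\<Sum>m\<le>k. smult (ip p (GS m) / gam m) (GS m)) = (\<Sum>m\<le>k. smult (\<beta> m) (GS m))"
    by (intro sum.cong) auto
  with b show ?thesis by simp
qed

lemma GS_low: assumes "degree q < n" shows "ip (GS n) q = 0"
proof -
  have n: "n > 0" using assms by simp
  have "degree q \<le> n - 1" using assms by simp
  from GS_span[OF this] obtain \<beta> where b: "q = (\<Sum>m\<le>n-1. smult (\<beta> m) (GS m))" by blast
  have "ip (GS n) q = (\<Sum>m\<le>n-1. \<beta> m * ip (GS m) (GS n))"
    by (subst ip_sym) (simp add: b ip_sum ip_smult)
  also have "\<dots> = 0"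
  proof (rule sum.neutral, intro ballI)
    fix m assume "m \<in> {..n-1}"
    hence "m < n" using n by auto
    thus "\<beta> m * ip (GS m) (GS n) = 0" using GS_orth[of m n] by (simp add: ip_sym)
  qed
  finally show ?thesis .
qed

lemma GS_at1: "poly (GS k) 1 \<noteq> 0"
proof
  assume z: "poly (GS k) 1 = 0"
  then obtain q where q: "GS k = [:-1, 1:] * q" using poly_eq_0_iff_dvd[of "GS k" 1] by auto
  have qnz: "q \<noteq> 0" using q GS_nz[of k] by auto
  have "degree ([:-1, 1:] * q) = degree [:-1, 1::real:] + degree q"
    by (rule degree_mult_eq) (use qnz in auto)
  hence "degree (GS k) = 1 + degree q" using q by simp
  hence dq: "degree q < k" using GS_deg[of k] by simp
  have "ip (GS k) q = 0" by (rule GS_low[OF dq])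
  hence i0: "integral {0..1} (\<lambda>s. (1 - s) * (poly q s * poly q s)) = 0"
  proof -
    assume "ip (GS k) q = 0"
    hence "integral {0..1} (\<lambda>s. - ((1 - s) * (poly q s * poly q s))) = 0"
      unfolding ip_def q by (simp add: algebra_simps)
    thus ?thesis by (simp add: integral_neg)
  qed
  have "\<And>x. 0 < x \<Longrightarrow> x < 1 \<Longrightarrow> (1 - x) * (poly q x * poly q x) = 0"
    by (rule int01_zero[OF _ _ i0]) (auto intro!: continuous_intros)
  hence "q = 0" by (intro poly_zero_Ioo) auto
  with qnz show False by simp
qed

definition polybound :: "real poly \<Rightarrow> real" where
  "polybound q = (\<Sum>i\<le>degree q. \<bar>coeff q i\<bar>)"

lemma polybound_nonneg: "0 \<le> polybound q"
  unfolding polybound_def by (rule sum_nonneg) simp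

lemma poly_bound: assumes "\<bar>x\<bar> \<le> 1" shows "\<bar>poly q x\<bar> \<le> polybound q"
proof -
  have "\<bar>poly q x\<bar> = \<bar>\<Sum>i\<le>degree q. coeff q i * x ^ i\<bar>" by (simp add: poly_altdef)
  also have "\<dots> \<le> (\<Sum>i\<le>degree q. \<bar>coeff q i * x ^ i\<bar>)" by (rule sum_abs)
  also have "\<dots> \<le> (\<Sum>i\<le>degree q. \<bar>coeff q i\<bar>)"
  proof (rule sum_mono)
    fix i
    have "\<bar>x ^ i\<bar> \<le> 1" using assms by (simp add: power_abs power_le_one)
    thus "\<bar>coeff q i * x ^ i\<bar> \<le> \<bar>coeff q i\<bar>"
      by (simp add: abs_mult mult_left_le)
  qed
  finally show ?thesis unfolding polybound_def .
qed

lemma pderiv_sum: "pderiv (\<Sum>m\<in>A. f m) = (\<Sum>m\<in>A. pderiv (f m))"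
  by (induction A rule: infinite_finite_induct) (auto simp: pderiv_add)

lemma hpderiv_sum: "(pderiv ^^ l) (\<Sum>m\<in>A. f m) = (\<Sum>m\<in>A. (pderiv ^^ l) (f m))"
  by (induction l) (auto simp: pderiv_sum)

lemma hpderiv_smult: "(pderiv ^^ l) (smult c p) = smult c ((pderiv ^^ l) p)"
  by (induction l) (auto simp: pderiv_smult)

lemma hpderiv_diff: "(pderiv ^^ l) (p - q) = (pderiv ^^ l) p - (pderiv ^^ l) (q :: real poly)"
  by (induction l) (auto simp: pderiv_diff)

lemma ip_expand: assumes "degree p \<le> k"
  shows "ip p p = (\<Sum>m\<le>k. (ip p (GS m) / gam m)^2 * gam m)"
proof -
  have "ip p p = ip (\<Sum>m\<le>k. smult (ip p (GS m) / gam m) (GS m)) p"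
    using GS_expand[OF assms] by simp
  also have "\<dots> = (\<Sum>m\<le>k. (ip p (GS m) / gam m) * ip (GS m) p)"
    by (simp add: ip_sum ip_smult)
  also have "\<dots> = (\<Sum>m\<le>k. (ip p (GS m) / gam m)^2 * gam m)"
    by (intro sum.cong refl) (use gam_pos in \<open>auto simp: ip_sym power2_eq_square\<close>)
  finally show ?thesis .
qed

lemma R3: "\<exists>C>0. \<forall>p l x. degree p \<le> k \<longrightarrow> l \<le> k \<longrightarrow> 0 \<le> x \<longrightarrow> x \<le> 1 \<longrightarrow>
              (poly ((pderiv ^^ l) p) x)^2 \<le> C * ip p p"
proof -
  define D where "D = 1 + (\<Sum>m\<le>k. \<Sum>l\<le>k. polybound ((pderiv ^^ l) (GS m)))"
  define g where "g = Min (gam ` {..k})"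
  have g0: "0 < g" unfolding g_def using gam_pos by (subst Min_gr_iff) auto
  have gle: "g \<le> gam m" if "m \<le> k" for m unfolding g_def using that by (intro Min_le) auto
  have D1: "polybound ((pderiv ^^ l) (GS m)) \<le> D" if "m \<le> k" "l \<le> k" for m l
  proof -
    have "polybound ((pderiv ^^ l) (GS m)) \<le> (\<Sum>l\<le>k. polybound ((pderiv ^^ l) (GS m)))"
      by (rule member_le_sum) (use that polybound_nonneg in auto)
    also have "\<dots> \<le> (\<Sum>m\<le>k. \<Sum>l\<le>k. polybound ((pderiv ^^ l) (GS m)))"
      by (rule member_le_sum[where f="\<lambda>m. \<Sum>l\<le>k. polybound ((pderiv ^^ l) (GS m))"])
         (use that polybound_nonneg in \<open>auto intro: sum_nonneg\<close>)
    finally show ?thesis unfolding D_def by simp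
  qed
  have D0: "0 \<le> D" unfolding D_def by (auto intro!: sum_nonneg add_nonneg_nonneg polybound_nonneg)
  define C where "C = (real (k+1) * D)^2 / g"
  show ?thesis
  proof (intro exI[of _ C] conjI allI impI)
    show "0 < C"
    proof -
      have "1 \<le> D" unfolding D_def by (auto intro!: sum_nonneg polybound_nonneg)
      hence "0 < D" by simp
      thus ?thesis unfolding C_def using g0 by simp
    qed
    fix p :: "real poly" and l and x :: real assume dp: "degree p \<le> k" and l: "l \<le> k" and x: "0 \<le> x" "x \<le> 1"
    define \<beta> where "\<beta> m = ip p (GS m) / gam m" for m
    have pe: "p = (\<Sum>m\<le>k. smult (\<beta> m) (GS m))" using GS_expand[OF dp] unfolding \<beta>_def .
    have ipp: "ip p p = (\<Sum>m\<le>k. (\<beta> m)^2 * gam m)" using ip_expand[OF dp] unfolding \<beta>_def .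
    have bj: "(\<beta> j)^2 \<le> ip p p / g" if "j \<le> k" for j
    proof -
      have "g * (\<beta> j)^2 \<le> (\<beta> j)^2 * gam j" using gle[OF that] by (simp add: mult.commute mult_right_mono)
      also have "\<dots> \<le> (\<Sum>m\<le>k. (\<beta> m)^2 * gam m)"
        by (rule member_le_sum[where f="\<lambda>m. (\<beta> m)^2 * gam m"]) (use that gam_pos in \<open>auto simp: less_imp_le\<close>)
      finally show ?thesis using g0 ipp by (simp add: field_simps)
    qed
    have "poly ((pderiv ^^ l) p) x = (\<Sum>m\<le>k. \<beta> m * poly ((pderiv ^^ l) (GS m)) x)"
      by (subst pe) (simp add: hpderiv_sum hpderiv_smult poly_sum)
    hence "\<bar>poly ((pderiv ^^ l) p) x\<bar> \<le> (\<Sum>m\<le>k. \<bar>\<beta> m\<bar> * D)"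
    proof -
      assume e: "poly ((pderiv ^^ l) p) x = (\<Sum>m\<le>k. \<beta> m * poly ((pderiv ^^ l) (GS m)) x)"
      have "\<bar>poly ((pderiv ^^ l) p) x\<bar> \<le> (\<Sum>m\<le>k. \<bar>\<beta> m * poly ((pderiv ^^ l) (GS m)) x\<bar>)"
        unfolding e by (rule sum_abs)
      also have "\<dots> \<le> (\<Sum>m\<le>k. \<bar>\<beta> m\<bar> * D)"
      proof (rule sum_mono)
        fix m assume "m \<in> {..k}"
        hence "\<bar>poly ((pderiv ^^ l) (GS m)) x\<bar> \<le> D"
          using poly_bound[of x] D1[of m l] l x by (smt (verit) atMost_iff)
        thus "\<bar>\<beta> m * poly ((pderiv ^^ l) (GS m)) x\<bar> \<le> \<bar>\<beta> m\<bar> * D"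
          by (simp add: abs_mult mult_left_mono)
      qed
      finally show ?thesis .
    qed
    hence "\<bar>poly ((pderiv ^^ l) p) x\<bar>^2 \<le> (\<Sum>m\<le>k. \<bar>\<beta> m\<bar> * D)^2"
      by (intro power_mono) auto
    hence "(poly ((pderiv ^^ l) p) x)^2 \<le> (\<Sum>m\<le>k. \<bar>\<beta> m\<bar> * D)^2" by simp
    also have "\<dots> \<le> (\<Sum>m\<le>k. (\<bar>\<beta> m\<bar> * D)^2) * real (k+1)"
      using sum_squared_le_sum_of_squares[of "\<lambda>m. \<bar>\<beta> m\<bar> * D" "{..k}"] by simp
    also have "\<dots> \<le> (\<Sum>m\<le>k. (ip p p / g) * D^2) * real (k+1)"
    proof (intro mult_right_mono sum_mono)
      fix m assume "m \<in> {..k}"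
      thus "(\<bar>\<beta> m\<bar> * D)^2 \<le> (ip p p / g) * D^2"
        using mult_right_mono[OF bj[of m], of "D^2"] by (simp add: power_mult_distrib)
    qed simp
    also have "\<dots> = C * ip p p" unfolding C_def by (simp add: power_mult_distrib field_simps power2_eq_square)
    finally show "(poly ((pderiv ^^ l) p) x)^2 \<le> C * ip p p" .
  qed
qed

definition rc :: "(real \<Rightarrow> real) \<Rightarrow> nat \<Rightarrow> real" where
  "rc g m = integral {0..1} (\<lambda>s. g s * poly (GS m) s) / gam m"

definition rtop :: "nat \<Rightarrow> (real \<Rightarrow> real) \<Rightarrow> real" where
  "rtop k g = (g 1 - (\<Sum>m<k. rc g m * poly (GS m) 1)) / poly (GS k) 1"

definition Rref :: "nat \<Rightarrow> (real \<Rightarrow> real) \<Rightarrow> real poly" where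
  "Rref k g = (\<Sum>m<k. smult (rc g m) (GS m)) + smult (rtop k g) (GS k)"

lemma Rref_deg: "degree (Rref k g) \<le> k"
  unfolding Rref_def
  by (intro degree_add_le degree_sum_le) (auto simp: GS_deg less_imp_le intro: order.trans[OF degree_smult_le])

lemma Rref_1: "poly (Rref k g) 1 = g 1"
  unfolding Rref_def rtop_def using GS_at1[of k] by (simp add: poly_sum)

lemma gint: "continuous_on {0..1} g \<Longrightarrow> (\<lambda>s. g s * poly q s) integrable_on {0..(1::real)}"
  by (intro integrable_continuous_interval continuous_intros) auto

lemma Rref_orthGS:
  assumes g: "continuous_on {0..1} g" and m: "m < k"
  shows "integral {0..1} (\<lambda>s. (g s - poly (Rref k g) s) * poly (GS m) s) = 0"
proof -
  have "integral {0..1} (\<lambda>s. (g s - poly (Rref k g) s) * poly (GS m) s)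
      = integral {0..1} (\<lambda>s. g s * poly (GS m) s) - ip (Rref k g) (GS m)"
    unfolding ip_def by (simp add: left_diff_distrib integral_diff[OF gint[OF g] pint])
  also have "ip (Rref k g) (GS m) = (\<Sum>j<k. rc g j * ip (GS j) (GS m)) + rtop k g * ip (GS k) (GS m)"
    unfolding Rref_def by (simp add: ip_add ip_sum ip_smult)
  also have "ip (GS k) (GS m) = 0" using GS_orth[OF m] .
  also have "(\<Sum>j<k. rc g j * ip (GS j) (GS m)) = (\<Sum>j\<in>{m}. rc g j * ip (GS j) (GS m))"
  proof (rule sum.mono_neutral_right)
    show "\<forall>i\<in>{..<k} - {m}. rc g i * ip (GS i) (GS m) = 0"
    proof
      fix i assume "i \<in> {..<k} - {m}"
      hence "i < m \<or> m < i" by auto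
      thus "rc g i * ip (GS i) (GS m) = 0" using GS_orth[of i m] GS_orth[of m i] by (auto simp: ip_sym)
    qed
  qed (use m in auto)
  also have "(\<Sum>j\<in>{m}. rc g j * ip (GS j) (GS m)) = integral {0..1} (\<lambda>s. g s * poly (GS m) s)"
    using gam_pos[of m] by (simp add: rc_def gam_def)
  finally show ?thesis by simp
qed

lemma Rref_orth:
  assumes g: "continuous_on {0..1} g" and q: "degree q < k"
  shows "integral {0..1} (\<lambda>s. (g s - poly (Rref k g) s) * poly q s) = 0"
proof -
  have "degree q \<le> k - 1" using q by simp
  from GS_span[OF this] obtain \<beta> where b: "q = (\<Sum>m\<le>k-1. smult (\<beta> m) (GS m))" by blast
  let ?e = "\<lambda>s. g s - poly (Rref k g) s"
  have ce: "continuous_on {0..1} ?e" using g by (intro continuous_intros) auto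
  have "integral {0..1} (\<lambda>s. ?e s * poly q s)
      = integral {0..1} (\<lambda>s. \<Sum>m\<le>k-1. \<beta> m * (?e s * poly (GS m) s))"
    by (simp add: b poly_sum sum_distrib_left algebra_simps)
  also have "\<dots> = (\<Sum>m\<le>k-1. integral {0..1} (\<lambda>s. \<beta> m * (?e s * poly (GS m) s)))"
    by (rule integral_sum) (auto intro!: integrable_continuous_interval continuous_intros ce)
  also have "\<dots> = (\<Sum>m\<le>k-1. \<beta> m * integral {0..1} (\<lambda>s. ?e s * poly (GS m) s))"
    by simp
  also have "\<dots> = 0"
  proof (rule sum.neutral, intro ballI)
    fix m assume "m \<in> {..k-1}"
    hence "m < k" using q by auto
    thus "\<beta> m * integral {0..1} (\<lambda>s. ?e s * poly (GS m) s) = 0" using Rref_orthGS[OF g] by simp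
  qed
  finally show ?thesis .
qed

lemma Rref_poly: assumes "degree p \<le> k" shows "Rref k (poly p) = p"
proof -
  define \<beta> where "\<beta> m = ip p (GS m) / gam m" for m
  have pe: "p = (\<Sum>m\<le>k. smult (\<beta> m) (GS m))" using GS_expand[OF assms] unfolding \<beta>_def .
  have rc: "rc (poly p) m = \<beta> m" for m unfolding rc_def \<beta>_def ip_def by simp
  have "poly p 1 = (\<Sum>m\<le>k. \<beta> m * poly (GS m) 1)"
    by (subst pe) (simp add: poly_sum)
  also have "\<dots> = (\<Sum>m<k. \<beta> m * poly (GS m) 1) + \<beta> k * poly (GS k) 1"
    by (simp add: lessThan_Suc_atMost[symmetric])
  finally have "rtop k (poly p) = \<beta> k" unfolding rtop_def rc using GS_at1[of k] by simp
  hence "Rref k (poly p) = (\<Sum>m<k. smult (\<beta> m) (GS m)) + smult (\<beta> k) (GS k)"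
    unfolding Rref_def rc by simp
  also have "\<dots> = (\<Sum>m\<le>k. smult (\<beta> m) (GS m))" by (simp add: lessThan_Suc_atMost[symmetric])
  also have "\<dots> = p" using pe by simp
  finally show ?thesis .
qed

lemma Rref_diff:
  assumes "continuous_on {0..1} g1" "continuous_on {0..1} g2"
  shows "Rref k (\<lambda>s. g1 s - g2 s) = Rref k g1 - Rref k g2"
proof -
  have rc: "rc (\<lambda>s. g1 s - g2 s) m = rc g1 m - rc g2 m" for m
    unfolding rc_def
    by (simp add: left_diff_distrib integral_diff[OF gint[OF assms(1)] gint[OF assms(2)]] diff_divide_distrib)
  have rt: "rtop k (\<lambda>s. g1 s - g2 s) = rtop k g1 - rtop k g2"
    unfolding rtop_def rc by (simp add: sum_subtractf left_diff_distrib diff_divide_distrib)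
  show ?thesis unfolding Rref_def rc rt
    by (simp add: sum_subtractf smult_diff_left algebra_simps)
qed

lemma Rref_cong: "(\<And>s. 0 \<le> s \<Longrightarrow> s \<le> 1 \<Longrightarrow> g1 s = g2 s) \<Longrightarrow> Rref k g1 = Rref k g2"
proof -
  assume e: "\<And>s. 0 \<le> s \<Longrightarrow> s \<le> 1 \<Longrightarrow> g1 s = g2 s"
  have "rc g1 m = rc g2 m" for m unfolding rc_def
    by (rule arg_cong[where f="\<lambda>x. x / gam m"], rule integral_cong) (use e in auto)
  moreover have "g1 1 = g2 1" using e by simp
  ultimately show ?thesis unfolding Rref_def rtop_def by simp
qed

lemma Rref_stab: "\<exists>CR>0. \<forall>g M x. continuous_on {0..1} g \<longrightarrow> (\<forall>s. 0 \<le> s \<and> s \<le> 1 \<longrightarrow> \<bar>g s\<bar> \<le> M)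
      \<longrightarrow> 0 \<le> x \<longrightarrow> x \<le> 1 \<longrightarrow> \<bar>poly (Rref k g) x\<bar> \<le> CR * M"
proof -
  define A where "A m = polybound (GS m)" for m
  define S1 where "S1 = (\<Sum>m<k. A m * A m / gam m)"
  define CR where "CR = 1 + S1 + (1 + S1) * A k / \<bar>poly (GS k) 1\<bar>"
  have A0: "0 \<le> A m" for m unfolding A_def by (rule polybound_nonneg)
  have S10: "0 \<le> S1" unfolding S1_def
    by (intro sum_nonneg divide_nonneg_nonneg mult_nonneg_nonneg A0 less_imp_le[OF gam_pos])
  have CR1: "1 + S1 \<le> CR" unfolding CR_def using A0 S10 by auto
  have CR2: "S1 + (1 + S1) * A k / \<bar>poly (GS k) 1\<bar> \<le> CR" unfolding CR_def by simp
  show ?thesis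
  proof (intro exI[of _ CR] conjI allI impI)
    show "0 < CR" using CR1 S10 by simp
    fix g :: "real \<Rightarrow> real" and M x :: real
    assume g: "continuous_on {0..1} g" and gM: "\<forall>s. 0 \<le> s \<and> s \<le> 1 \<longrightarrow> \<bar>g s\<bar> \<le> M"
      and x: "0 \<le> x" "x \<le> 1"
    have M0: "0 \<le> M" using gM[rule_format, of 0] by simp
    have GA: "\<bar>poly (GS m) s\<bar> \<le> A m" if "0 \<le> s" "s \<le> 1" for m s
      unfolding A_def by (rule poly_bound) (use that in auto)
    have rcb: "\<bar>rc g m\<bar> \<le> M * A m / gam m" for m
    proof -
      have "norm (integral {0..1} (\<lambda>s. g s * poly (GS m) s)) \<le> integral {0..(1::real)} (\<lambda>s. M * A m)"
      proof (rule Henstock_Kurzweil_Integration.integral_norm_bound_integral)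
        show "(\<lambda>s. g s * poly (GS m) s) integrable_on {0..1}" by (rule gint[OF g])
        show "(\<lambda>s. M * A m) integrable_on {0..(1::real)}" by (rule integrable_const_ivl)
        fix s assume "s \<in> {0..(1::real)}"
        hence "\<bar>g s\<bar> \<le> M" "\<bar>poly (GS m) s\<bar> \<le> A m" using gM GA by auto
        thus "norm (g s * poly (GS m) s) \<le> M * A m"
          by (simp add: abs_mult mult_mono M0 A0)
      qed
      hence "\<bar>integral {0..1} (\<lambda>s. g s * poly (GS m) s)\<bar> \<le> M * A m" by simp
      thus ?thesis unfolding rc_def using gam_pos[of m] by (simp add: abs_div divide_right_mono)
    qed
    have sb: "\<bar>\<Sum>m<k. rc g m * poly (GS m) y\<bar> \<le> M * S1" if "0 \<le> y" "y \<le> 1" for y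
    proof -
      have "\<bar>\<Sum>m<k. rc g m * poly (GS m) y\<bar> \<le> (\<Sum>m<k. \<bar>rc g m\<bar> * \<bar>poly (GS m) y\<bar>)"
        by (rule order.trans[OF sum_abs]) (simp add: abs_mult)
      also have "\<dots> \<le> (\<Sum>m<k. (M * A m / gam m) * A m)"
        by (rule sum_mono, rule mult_mono) (use rcb GA that A0 M0 gam_pos in \<open>auto intro!: divide_nonneg_nonneg mult_nonneg_nonneg simp: less_imp_le\<close>)
      also have "\<dots> = M * S1" unfolding S1_def by (simp add: sum_distrib_left mult.assoc)
      finally show ?thesis .
    qed
    have tb: "\<bar>rtop k g\<bar> \<le> M * (1 + S1) / \<bar>poly (GS k) 1\<bar>"
    proof -
      have "\<bar>g 1 - (\<Sum>m<k. rc g m * poly (GS m) 1)\<bar> \<le> M + M * S1"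
        using gM[rule_format, of 1] sb[of 1] by simp
      thus ?thesis unfolding rtop_def using GS_at1[of k] by (simp add: abs_div divide_right_mono algebra_simps)
    qed
    have "\<bar>poly (Rref k g) x\<bar> = \<bar>(\<Sum>m<k. rc g m * poly (GS m) x) + rtop k g * poly (GS k) x\<bar>"
      unfolding Rref_def by (simp add: poly_sum)
    also have "\<dots> \<le> M * S1 + \<bar>rtop k g\<bar> * \<bar>poly (GS k) x\<bar>"
      using sb[OF x] by (simp add: abs_mult abs_triangle_ineq order.trans[OF abs_triangle_ineq])
    also have "\<dots> \<le> M * S1 + (M * (1 + S1) / \<bar>poly (GS k) 1\<bar>) * A k"
      by (intro add_left_mono mult_mono tb GA x) (auto simp: M0 S10)
    also have "\<dots> = M * (S1 + (1 + S1) * A k / \<bar>poly (GS k) 1\<bar>)" by (simp add: algebra_simps)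
    also have "\<dots> \<le> M * CR" by (rule mult_left_mono[OF CR2 M0])
    finally show "\<bar>poly (Rref k g) x\<bar> \<le> CR * M" by (simp add: mult.commute)
  qed
qed

definition pull :: "real poly \<Rightarrow> real \<Rightarrow> real \<Rightarrow> real poly" where
  "pull p al h = p \<circ>\<^sub>p [:al, h:]"
definition push :: "real poly \<Rightarrow> real \<Rightarrow> real \<Rightarrow> real poly" where
  "push q al h = q \<circ>\<^sub>p [:-al/h, 1/h:]"
definition Proj :: "nat \<Rightarrow> real \<Rightarrow> real \<Rightarrow> (real \<Rightarrow> real) \<Rightarrow> real poly" where
  "Proj k al h g = push (Rref k (\<lambda>s. g (al + h * s))) al h"

lemma poly_pull[simp]: "poly (pull p al h) s = poly p (al + h * s)"
  unfolding pull_def by (simp add: poly_pcompose mult.commute)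

lemma poly_push[simp]: "poly (push q al h) x = poly q ((x - al) / h)"
  unfolding push_def by (simp add: poly_pcompose diff_divide_distrib)

lemma deg_pull: "h \<noteq> 0 \<Longrightarrow> degree (pull p al h) = degree p"
  unfolding pull_def by (simp add: degree_pcompose)

lemma deg_push: "h \<noteq> 0 \<Longrightarrow> degree (push p al h) = degree p"
  unfolding push_def by (simp add: degree_pcompose)

lemma hpderiv_pull: "(pderiv ^^ l) (pull p al h) = smult (h ^ l) (pull ((pderiv ^^ l) p) al h)"
proof (induction l)
  case 0 thus ?case by simp
next
  case (Suc l)
  have "(pderiv ^^ Suc l) (pull p al h) = pderiv (smult (h ^ l) (pull ((pderiv ^^ l) p) al h))"
    using Suc by simp
  also have "\<dots> = smult (h ^ Suc l) (pull ((pderiv ^^ Suc l) p) al h)"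
    unfolding pull_def pderiv_smult pderiv_pcompose by (simp add: pderiv_pCons mult.commute)
  finally show ?case .
qed

lemma int_sq_pull:
  assumes h: "0 < h"
  shows "integral {al..al + h} (\<lambda>x. (poly p x)^2) = h * ip (pull p al h) (pull p al h)"
  unfolding ip_def by (subst cov[OF h]) (auto intro!: continuous_intros simp: power2_eq_square)

lemma INV: "\<exists>Ci>0. \<forall>al h (p::real poly) l x. 0 < h \<longrightarrow> degree p \<le> k \<longrightarrow> l \<le> k \<longrightarrow> al \<le> x \<longrightarrow> x \<le> al + h \<longrightarrow>
     (poly ((pderiv ^^ l) p) x)^2 * h ^ (2 * l + 1) \<le> Ci * integral {al..al + h} (\<lambda>x. (poly p x)^2)"
proof -
  obtain C where C: "C > 0" and R: "\<And>p l x. degree p \<le> k \<Longrightarrow> l \<le> k \<Longrightarrow> 0 \<le> x \<Longrightarrow> x \<le> 1 \<Longrightarrow>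
              (poly ((pderiv ^^ l) p) x)^2 \<le> C * ip p p" using R3[of k] by blast
  show ?thesis
  proof (intro exI[of _ C] conjI allI impI)
    show "0 < C" by (rule C)
    fix al h :: real and p :: "real poly" and l :: nat and x :: real
    assume h: "0 < h" and dp: "degree p \<le> k" and l: "l \<le> k" and x: "al \<le> x" "x \<le> al + h"
    define s where "s = (x - al) / h"
    have s: "0 \<le> s" "s \<le> 1" using h x unfolding s_def by (auto simp: field_simps)
    have xs: "al + h * s = x" using h unfolding s_def by simp
    have "poly ((pderiv ^^ l) (pull p al h)) s = h ^ l * poly ((pderiv ^^ l) p) x"
      by (simp add: hpderiv_pull xs)
    moreover have "(poly ((pderiv ^^ l) (pull p al h)) s)^2 \<le> C * ip (pull p al h) (pull p al h)"
      by (rule R[OF _ l s]) (simp add: deg_pull dp h[THEN less_imp_neq, symmetric])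
    ultimately have "(h ^ l * poly ((pderiv ^^ l) p) x)^2 * h \<le> C * ip (pull p al h) (pull p al h) * h"
      using h by (intro mult_right_mono) auto
    also have "\<dots> = C * integral {al..al + h} (\<lambda>x. (poly p x)^2)"
      by (simp add: int_sq_pull[OF h])
    finally show "(poly ((pderiv ^^ l) p) x)^2 * h ^ (2 * l + 1) \<le> C * integral {al..al + h} (\<lambda>x. (poly p x)^2)"
      by (simp add: power_mult_distrib power_add power_mult algebra_simps power2_eq_square)
  qed
qed

lemma poly_Proj: "poly (Proj k al h g) x = poly (Rref k (\<lambda>s. g (al + h * s))) ((x - al) / h)"
  unfolding Proj_def by simp

lemma Proj_deg: "0 < h \<Longrightarrow> degree (Proj k al h g) \<le> k"
  unfolding Proj_def by (simp add: deg_push Rref_deg)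

lemma Proj_R: "0 < h \<Longrightarrow> poly (Proj k al h g) (al + h) = g (al + h)"
  unfolding poly_Proj by (simp add: Rref_1)

lemma cont_hat: fixes al h :: real and g :: "real \<Rightarrow> real" assumes h: "0 < h" and g: "continuous_on {al..al + h} g"
  shows "continuous_on {0..1} (\<lambda>s. g (al + h * s))"
proof (rule continuous_on_compose2[OF g])
  show "continuous_on {0..(1::real)} (\<lambda>s. al + h * s)" by (intro continuous_intros)
  show "(\<lambda>s. al + h * s) ` {0..1} \<subseteq> {al..al + h}" using h by (auto simp: mult_le_cancel_left1)
qed

lemma Proj_orth:
  assumes h: "0 < h" and g: "continuous_on {al..al + h} g" and q: "degree q < k"
  shows "integral {al..al + h} (\<lambda>x. (g x - poly (Proj k al h g) x) * poly q x) = 0"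
proof -
  have c: "continuous_on {al..al + h} (\<lambda>x. (g x - poly (Proj k al h g) x) * poly q x)"
    using g by (intro continuous_intros) auto
  have "integral {al..al + h} (\<lambda>x. (g x - poly (Proj k al h g) x) * poly q x)
      = h * integral {0..1} (\<lambda>s. (g (al + h * s) - poly (Rref k (\<lambda>s. g (al + h * s))) s) * poly (pull q al h) s)"
    using h by (subst cov[OF h c]) (simp add: poly_Proj)
  also have "\<dots> = 0"
    using Rref_orth[OF cont_hat[OF h g], of "pull q al h"] q h by (simp add: deg_pull)
  finally show ?thesis .
qed

lemma Proj_poly: assumes h: "0 < h" and p: "degree p \<le> k"
  shows "poly (Proj k al h (poly p)) x = poly p x"
proof -
  have e: "(\<lambda>s. poly p (al + h * s)) = poly (pull p al h)" by (simp add: fun_eq_iff)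
  have "Rref k (\<lambda>s. poly p (al + h * s)) = pull p al h"
    unfolding e by (rule Rref_poly) (simp add: deg_pull p h[THEN less_imp_neq, symmetric])
  thus ?thesis using h by (simp add: poly_Proj)
qed

lemma Proj_diff:
  assumes h: "0 < h" and g: "continuous_on {al..al + h} g1" "continuous_on {al..al + h} g2"
  shows "poly (Proj k al h (\<lambda>x. g1 x - g2 x)) x = poly (Proj k al h g1) x - poly (Proj k al h g2) x"
  unfolding poly_Proj using Rref_diff[OF cont_hat[OF h g(1)] cont_hat[OF h g(2)], of k] by simp

lemma Proj_cong: assumes h: "0 < h" and e: "\<And>x. al \<le> x \<Longrightarrow> x \<le> al + h \<Longrightarrow> g1 x = g2 x"
  shows "Proj k al h g1 = Proj k al h g2"
  unfolding Proj_def
proof (rule arg_cong[where f="\<lambda>r. push r al h"], rule Rref_cong)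
  fix s :: real assume "0 \<le> s" "s \<le> 1"
  thus "g1 (al + h * s) = g2 (al + h * s)" using h by (intro e) (auto simp: mult_le_cancel_left1)
qed

lemma Proj_stab: "\<exists>CR>0. \<forall>al h g M x. 0 < h \<longrightarrow> continuous_on {al..al + h} g \<longrightarrow>
    (\<forall>y. al \<le> y \<and> y \<le> al + h \<longrightarrow> \<bar>g y\<bar> \<le> M) \<longrightarrow> al \<le> x \<longrightarrow> x \<le> al + h \<longrightarrow>
    \<bar>poly (Proj k al h g) x\<bar> \<le> CR * M"
proof -
  obtain CR where CR: "CR > 0" and R: "\<And>g M x. continuous_on {0..1} g \<Longrightarrow> (\<forall>s. 0 \<le> s \<and> s \<le> 1 \<longrightarrow> \<bar>g s\<bar> \<le> M)
      \<Longrightarrow> 0 \<le> x \<Longrightarrow> x \<le> 1 \<Longrightarrow> \<bar>poly (Rref k g) x\<bar> \<le> CR * M" using Rref_stab[of k] by blast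
  show ?thesis
  proof (intro exI[of _ CR] conjI allI impI)
    show "0 < CR" by (rule CR)
    fix al h :: real and g :: "real \<Rightarrow> real" and M x :: real
    assume h: "0 < h" and g: "continuous_on {al..al + h} g"
      and gM: "\<forall>y. al \<le> y \<and> y \<le> al + h \<longrightarrow> \<bar>g y\<bar> \<le> M" and x: "al \<le> x" "x \<le> al + h"
    have "\<bar>poly (Rref k (\<lambda>s. g (al + h * s))) ((x - al) / h)\<bar> \<le> CR * M"
    proof (rule R[OF cont_hat[OF h g]])
      show "\<forall>s. 0 \<le> s \<and> s \<le> 1 \<longrightarrow> \<bar>g (al + h * s)\<bar> \<le> M"
        using gM h by (auto simp: mult_le_cancel_left1)
      show "0 \<le> (x - al) / h" "(x - al) / h \<le> 1" using x h by (auto simp: field_simps)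
    qed
    thus "\<bar>poly (Proj k al h g) x\<bar> \<le> CR * M" by (simp add: poly_Proj)
  qed
qed

definition TayS :: "(nat \<Rightarrow> real \<Rightarrow> real) \<Rightarrow> real \<Rightarrow> nat \<Rightarrow> real poly" where
  "TayS fd c n = (\<Sum>m\<le>n. monom (fd m c / fact m) m)"

definition Tay :: "(nat \<Rightarrow> real \<Rightarrow> real) \<Rightarrow> real \<Rightarrow> nat \<Rightarrow> real poly" where
  "Tay fd c n = TayS fd c n \<circ>\<^sub>p [:-c, 1:]"

lemma poly_Tay: "poly (Tay fd c n) x = (\<Sum>m<Suc n. fd m c / fact m * (x - c) ^ m)"
  unfolding Tay_def TayS_def by (simp add: poly_pcompose poly_sum poly_monom lessThan_Suc_atMost)

lemma deg_Tay: "degree (Tay fd c n) \<le> n"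
proof -
  have "degree (TayS fd c n) \<le> n" unfolding TayS_def
    by (rule degree_sum_le) (auto intro: order.trans[OF degree_monom_le])
  thus ?thesis unfolding Tay_def by (simp add: degree_pcompose)
qed

lemma hpderiv_shift: "(pderiv ^^ l) (p \<circ>\<^sub>p [:-c, 1:]) = ((pderiv ^^ l) p) \<circ>\<^sub>p [:-c, 1::real:]"
  by (induction l) (simp_all add: pderiv_pcompose pderiv_pCons)

lemma Tay_at: assumes "l \<le> n" shows "poly ((pderiv ^^ l) (Tay fd c n)) c = fd l c"
proof -
  have "poly ((pderiv ^^ l) (Tay fd c n)) c = coeff ((pderiv ^^ l) (TayS fd c n)) 0"
    unfolding Tay_def hpderiv_shift by (simp add: poly_pcompose poly_0_coeff_0)
  also have "\<dots> = pochhammer 1 l * coeff (TayS fd c n) l"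
    by (simp add: coeff_higher_pderiv)
  also have "coeff (TayS fd c n) l = fd l c / fact l"
    unfolding TayS_def using assms by (simp add: coeff_sum coeff_monom)
  finally show ?thesis by (simp add: pochhammer_fact[symmetric])
qed

lemma Tay_err:
  fixes fd :: "nat \<Rightarrow> real \<Rightarrow> real"
  assumes d: "\<forall>m y. DERIV (fd m) y :> fd (Suc m) y"
    and B: "\<forall>y. lo \<le> y \<and> y \<le> hi \<longrightarrow> \<bar>fd (Suc n) y\<bar> \<le> B"
    and c: "lo \<le> c" "c \<le> hi" and x: "lo \<le> x" "x \<le> hi"
  shows "\<bar>fd 0 x - poly (Tay fd c n) x\<bar> \<le> B * \<bar>x - c\<bar> ^ Suc n / fact (Suc n)"
proof (cases "x = c")
  case True
  have "poly (Tay fd c n) c = fd 0 c"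
    unfolding poly_Tay by (simp add: sum.lessThan_Suc_shift del: sum.lessThan_Suc)
  moreover have "0 \<le> B" using B[rule_format, of c] c by simp
  ultimately show ?thesis using True by simp
next
  case False
  obtain t where t: "(if x < c then x < t \<and> t < c else c < t \<and> t < x)"
    and e: "fd 0 x = (\<Sum>m<Suc n. fd m c / fact m * (x - c) ^ m) + fd (Suc n) t / fact (Suc n) * (x - c) ^ Suc n"
    using Taylor[of "Suc n" fd "fd 0" lo hi c x] d c x False by auto
  have tI: "lo \<le> t" "t \<le> hi" using t c x by (auto split: if_splits)
  have "\<bar>fd 0 x - poly (Tay fd c n) x\<bar> = \<bar>fd (Suc n) t\<bar> / fact (Suc n) * \<bar>x - c\<bar> ^ Suc n"
    unfolding poly_Tay e by (simp add: abs_mult power_abs)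
  also have "\<dots> \<le> B / fact (Suc n) * \<bar>x - c\<bar> ^ Suc n"
    using B tI by (intro mult_right_mono divide_right_mono) auto
  finally show ?thesis by simp
qed

lemma deriv_cont: "\<forall>m y. DERIV (fd m) y :> fd (Suc m) y \<Longrightarrow> continuous_on S (fd m)"
  by (meson DERIV_isCont continuous_at_imp_continuous_on)

lemma E1: "\<exists>Ce>0. \<forall>al h fd B x. 0 < h \<longrightarrow> (\<forall>m y. DERIV (fd m) y :> fd (Suc m) y) \<longrightarrow>
     (\<forall>y. al \<le> y \<and> y \<le> al + h \<longrightarrow> \<bar>fd (Suc k) y\<bar> \<le> B) \<longrightarrow> al \<le> x \<longrightarrow> x \<le> al + h \<longrightarrow>
     \<bar>fd 0 x - poly (Proj k al h (fd 0)) x\<bar> \<le> Ce * B * h ^ Suc k"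
proof -
  obtain CR where CR: "CR > 0" and R: "\<And>al h g M x. 0 < h \<Longrightarrow> continuous_on {al..al + h} g \<Longrightarrow>
    (\<forall>y. al \<le> y \<and> y \<le> al + h \<longrightarrow> \<bar>g y\<bar> \<le> M) \<Longrightarrow> al \<le> x \<Longrightarrow> x \<le> al + h \<Longrightarrow>
    \<bar>poly (Proj k al h g) x\<bar> \<le> CR * M" using Proj_stab[of k] by blast
  define Ce where "Ce = (1 + CR) / fact (Suc k)"
  show ?thesis
  proof (intro exI[of _ Ce] conjI allI impI)
    show "0 < Ce" unfolding Ce_def using CR by simp
    fix al h :: real and fd :: "nat \<Rightarrow> real \<Rightarrow> real" and B x :: real
    assume h: "0 < h" and d: "\<forall>m y. DERIV (fd m) y :> fd (Suc m) y"
      and B: "\<forall>y. al \<le> y \<and> y \<le> al + h \<longrightarrow> \<bar>fd (Suc k) y\<bar> \<le> B" and x: "al \<le> x" "x \<le> al + h"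
    define T where "T = Tay fd (al + h) k"
    define eps where "eps = B * h ^ Suc k / fact (Suc k)"
    have B0: "0 \<le> B" using B[rule_format, of al] h by simp
    have eb: "\<bar>fd 0 y - poly T y\<bar> \<le> eps" if "al \<le> y" "y \<le> al + h" for y
    proof -
      have "\<bar>fd 0 y - poly T y\<bar> \<le> B * \<bar>y - (al + h)\<bar> ^ Suc k / fact (Suc k)"
        unfolding T_def by (rule Tay_err[OF d B]) (use that h in auto)
      also have "\<dots> \<le> eps" unfolding eps_def
        by (intro divide_right_mono mult_left_mono power_mono) (use that B0 in auto)
      finally show ?thesis .
    qed
    have c0: "continuous_on {al..al + h} (fd 0)" by (rule deriv_cont[OF d])
    have c1: "continuous_on {al..al + h} (poly T)" by (intro continuous_intros)
    have ce: "continuous_on {al..al + h} (\<lambda>y. fd 0 y - poly T y)" using c0 c1 by (intro continuous_intros)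
    have "poly (Proj k al h (\<lambda>y. fd 0 y - poly T y)) x = poly (Proj k al h (fd 0)) x - poly (Proj k al h (poly T)) x"
      by (rule Proj_diff[OF h c0 c1])
    also have "poly (Proj k al h (poly T)) x = poly T x"
      by (rule Proj_poly[OF h]) (simp add: T_def deg_Tay)
    finally have pe: "fd 0 x - poly (Proj k al h (fd 0)) x = (fd 0 x - poly T x) - poly (Proj k al h (\<lambda>y. fd 0 y - poly T y)) x"
      by simp
    have "\<bar>poly (Proj k al h (\<lambda>y. fd 0 y - poly T y)) x\<bar> \<le> CR * eps"
      by (rule R[OF h ce _ x]) (use eb in auto)
    hence "\<bar>fd 0 x - poly (Proj k al h (fd 0)) x\<bar> \<le> eps + CR * eps"
      unfolding pe using eb[OF x] by simp
    also have "\<dots> = Ce * B * h ^ Suc k" unfolding Ce_def eps_def by (simp add: add_divide_distrib algebra_simps)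
    finally show "\<bar>fd 0 x - poly (Proj k al h (fd 0)) x\<bar> \<le> Ce * B * h ^ Suc k" .
  qed
qed

lemma sm_diff: "smooth2 f \<Longrightarrow> (\<lambda>q::real \<times> real. pderivs ds f (fst q) (snd q)) differentiable (at p)"
  unfolding smooth2_def by blast

lemma sm_cont: "smooth2 f \<Longrightarrow> continuous_on S (\<lambda>q::real \<times> real. pderivs ds f (fst q) (snd q))"
proof -
  assume "smooth2 f"
  hence "\<And>p. isCont (\<lambda>q::real \<times> real. pderivs ds f (fst q) (snd q)) p"
    using sm_diff differentiable_imp_continuous_within by blast
  thus ?thesis by (intro continuous_at_imp_continuous_on) auto
qed

lemma sm_dx: assumes "smooth2 f"
  shows "((\<lambda>y. pderivs ds f y t) has_real_derivative pderivs (True # ds) f x t) (at x)"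
proof -
  have g: "(\<lambda>y::real. (y, t)) differentiable (at x)"
  proof -
    have "((\<lambda>y::real. (y, t)) has_derivative (\<lambda>d. (d, 0))) (at x)"
      by (intro derivative_eq_intros) auto
    thus ?thesis by (rule differentiableI)
  qed
  have "((\<lambda>q::real \<times> real. pderivs ds f (fst q) (snd q)) \<circ> (\<lambda>y. (y, t))) differentiable (at x)"
    by (rule differentiable_chain_at[OF g]) (simp add: sm_diff[OF assms])
  hence "(\<lambda>y. pderivs ds f y t) differentiable (at x)" by (simp add: o_def)
  hence "DERIV (\<lambda>y. pderivs ds f y t) x :> deriv (\<lambda>y. pderivs ds f y t) x"
    by (simp add: DERIV_deriv_iff_real_differentiable)
  thus ?thesis by (simp add: Dx_def)
qed

lemma sm_dt: assumes "smooth2 f"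
  shows "((\<lambda>s. pderivs ds f x s) has_real_derivative pderivs (False # ds) f x t) (at t)"
proof -
  have g: "(\<lambda>s::real. (x, s)) differentiable (at t)"
  proof -
    have "((\<lambda>s::real. (x, s)) has_derivative (\<lambda>d. (0, d))) (at t)"
      by (intro derivative_eq_intros) auto
    thus ?thesis by (rule differentiableI)
  qed
  have "((\<lambda>q::real \<times> real. pderivs ds f (fst q) (snd q)) \<circ> (\<lambda>s. (x, s))) differentiable (at t)"
    by (rule differentiable_chain_at[OF g]) (simp add: sm_diff[OF assms])
  hence "(\<lambda>s. pderivs ds f x s) differentiable (at t)" by (simp add: o_def)
  hence "DERIV (\<lambda>s. pderivs ds f x s) t :> deriv (\<lambda>s. pderivs ds f x s) t"
    by (simp add: DERIV_deriv_iff_real_differentiable)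
  thus ?thesis by (simp add: Dt_def)
qed

definition Dn :: "(real \<Rightarrow> real \<Rightarrow> real) \<Rightarrow> nat \<Rightarrow> real \<Rightarrow> real \<Rightarrow> real" where
  "Dn f m = pderivs (replicate m True) f"

lemma Dn_0: "Dn f 0 = f" by (simp add: Dn_def)

lemma Dn_Suc: "Dn f (Suc m) = Dx (Dn f m)" by (simp add: Dn_def)

lemma Dn_1: "Dn f 1 = Dx f" by (simp add: Dn_def)

lemma Dt_pd: "Dt f = pderivs [False] f" by simp

lemma Dn_deriv: "smooth2 f \<Longrightarrow> DERIV (\<lambda>y. Dn f m y t) x :> Dn f (Suc m) x t"
  unfolding Dn_def using sm_dx[of f "replicate m True" t x] by simp

lemma Dn_cont: "smooth2 f \<Longrightarrow> continuous_on S (\<lambda>q::real \<times> real. Dn f m (fst q) (snd q))"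
  unfolding Dn_def by (rule sm_cont)

lemma deriv_shift_eq: "deriv g (x + L) = deriv (\<lambda>y. g (y + L)) (x::real)"
  unfolding deriv_def by (simp add: DERIV_shift)

lemma Dn_periodic: assumes "\<forall>x t. f (x + L) t = f x t"
  shows "Dn f m (x + L) t = Dn f m x t"
proof (induction m arbitrary: x)
  case 0 thus ?case using assms by (simp add: Dn_0)
next
  case (Suc m)
  have "(\<lambda>y. Dn f m (y + L) t) = (\<lambda>y. Dn f m y t)" using Suc by simp
  thus ?case by (simp add: Dn_Suc Dx_def deriv_shift_eq[of "\<lambda>y. Dn f m y t"])
qed

lemma Dn_bound: assumes "smooth2 f"
  shows "\<exists>B\<ge>0. \<forall>m x t. m \<le> K \<longrightarrow> a \<le> x \<longrightarrow> x \<le> b \<longrightarrow> 0 \<le> t \<longrightarrow> t \<le> T \<longrightarrow> \<bar>Dn f m x t\<bar> \<le> B"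
proof -
  have "\<exists>Bm\<ge>0. \<forall>x t. a \<le> x \<longrightarrow> x \<le> b \<longrightarrow> 0 \<le> t \<longrightarrow> t \<le> T \<longrightarrow> \<bar>Dn f m x t\<bar> \<le> Bm" for m
  proof -
    have "compact ((\<lambda>q::real \<times> real. Dn f m (fst q) (snd q)) ` ({a..b} \<times> {0..T}))"
      by (intro compact_continuous_image Dn_cont[OF assms] compact_Times compact_Icc)
    hence "bounded ((\<lambda>q::real \<times> real. Dn f m (fst q) (snd q)) ` ({a..b} \<times> {0..T}))"
      by (rule compact_imp_bounded)
    then obtain Bm where Bm: "\<forall>y\<in>(\<lambda>q::real \<times> real. Dn f m (fst q) (snd q)) ` ({a..b} \<times> {0..T}). norm y \<le> Bm"
      unfolding bounded_iff by blast
    show ?thesis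
      by (intro exI[of _ "\<bar>Bm\<bar>"]) (use Bm in \<open>force\<close>)
  qed
  then obtain Bf where Bf: "\<And>m. 0 \<le> Bf m" "\<And>m x t. a \<le> x \<Longrightarrow> x \<le> b \<Longrightarrow> 0 \<le> t \<Longrightarrow> t \<le> T \<Longrightarrow> \<bar>Dn f m x t\<bar> \<le> Bf m"
    by metis
  show ?thesis
  proof (intro exI[of _ "\<Sum>m\<le>K. Bf m"] conjI allI impI)
    show "0 \<le> (\<Sum>m\<le>K. Bf m)" by (intro sum_nonneg Bf(1))
    fix m x t assume "m \<le> K" "a \<le> x" "x \<le> b" "0 \<le> t" "t \<le> T"
    hence "\<bar>Dn f m x t\<bar> \<le> Bf m" using Bf(2) by blast
    also have "Bf m \<le> (\<Sum>m\<le>K. Bf m)" by (rule member_le_sum) (use \<open>m \<le> K\<close> Bf(1) in auto)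
    finally show "\<bar>Dn f m x t\<bar> \<le> (\<Sum>m\<le>K. Bf m)" .
  qed
qed

lemma rc_deriv: assumes u: "smooth2 u"
  shows "((\<lambda>s. rc (\<lambda>\<sigma>. u (al + h * \<sigma>) s) m) has_real_derivative rc (\<lambda>\<sigma>. Dt u (al + h * \<sigma>) t) m) (at t)"
proof -
  have L: "((\<lambda>s. integral (cbox 0 1) (\<lambda>\<sigma>. u (al + h * \<sigma>) s * poly (GS m) \<sigma>)) has_field_derivative
        integral (cbox 0 1) (\<lambda>\<sigma>. Dt u (al + h * \<sigma>) t * poly (GS m) \<sigma>)) (at t within UNIV)"
  proof (rule leibniz_rule_field_derivative[where fx="\<lambda>s \<sigma>. Dt u (al + h * \<sigma>) s * poly (GS m) \<sigma>"])
    fix s :: real and \<sigma> :: real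
    have "((\<lambda>s. pderivs [] u (al + h * \<sigma>) s) has_real_derivative pderivs [False] u (al + h * \<sigma>) s) (at s)"
      by (rule sm_dt[OF u])
    hence "((\<lambda>s. u (al + h * \<sigma>) s) has_real_derivative Dt u (al + h * \<sigma>) s) (at s)" by simp
    from DERIV_cmult_right[OF this, of "poly (GS m) \<sigma>"]
    show "((\<lambda>s. u (al + h * \<sigma>) s * poly (GS m) \<sigma>) has_field_derivative Dt u (al + h * \<sigma>) s * poly (GS m) \<sigma>) (at s within UNIV)"
      by simp
  next
    fix s :: real
    have c: "continuous_on UNIV (\<lambda>q::real \<times> real. u (fst q) (snd q))" using sm_cont[OF u, of UNIV "[]"] by simp
    have "continuous_on (cbox 0 1) (\<lambda>\<sigma>. u (al + h * \<sigma>) s)"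
    proof -
      have cp: "continuous_on (cbox 0 1) (\<lambda>\<sigma>::real. (al + h * \<sigma>, s))" by (intro continuous_intros)
      show ?thesis using continuous_on_compose2[OF c cp] by simp
    qed
    thus "(\<lambda>\<sigma>. u (al + h * \<sigma>) s * poly (GS m) \<sigma>) integrable_on cbox 0 1"
      by (intro integrable_continuous continuous_intros)
  next
    have c: "continuous_on UNIV (\<lambda>q::real \<times> real. Dt u (fst q) (snd q))" using sm_cont[OF u, of UNIV "[False]"] by simp
    have "continuous_on (UNIV \<times> cbox 0 1) (\<lambda>q::real \<times> real. Dt u (al + h * snd q) (fst q))"
    proof -
      have cp: "continuous_on (UNIV \<times> cbox 0 1) (\<lambda>q::real \<times> real. (al + h * snd q, fst q))"
        by (intro continuous_intros)
      show ?thesis using continuous_on_compose2[OF c cp] by simp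
    qed
    hence "continuous_on (UNIV \<times> cbox 0 1) (\<lambda>q::real \<times> real. Dt u (al + h * snd q) (fst q) * poly (GS m) (snd q))"
      by (intro continuous_intros) auto
    thus "continuous_on (UNIV \<times> cbox 0 1) (\<lambda>(s, \<sigma>). Dt u (al + h * \<sigma>) s * poly (GS m) \<sigma>)"
      by (simp add: case_prod_beta')
  qed auto
  show ?thesis unfolding rc_def using DERIV_cdivide[OF L, of "gam m"] by simp
qed

lemma coeff_push: "push (p + q) al h = push p al h + push q al h" "push (smult c p) al h = smult c (push p al h)"
  "push (\<Sum>m\<in>A. f m) al h = (\<Sum>m\<in>A. push (f m) al h)"
  unfolding push_def by (simp_all add: pcompose_add pcompose_smult pcompose_sum)

lemma coeff_Proj: "coeff (Proj k al h g) j = (\<Sum>m<k. rc (\<lambda>\<sigma>. g (al + h * \<sigma>)) m * coeff (push (GS m) al h) j)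
     + rtop k (\<lambda>\<sigma>. g (al + h * \<sigma>)) * coeff (push (GS k) al h) j"
  unfolding Proj_def Rref_def coeff_push by (simp add: coeff_sum)

lemma Proj_tderiv: assumes u: "smooth2 u"
  shows "((\<lambda>s. coeff (Proj k al h (\<lambda>x. u x s)) j) has_real_derivative coeff (Proj k al h (\<lambda>x. Dt u x t)) j) (at t)"
proof -
  have r: "((\<lambda>s. rc (\<lambda>\<sigma>. u (al + h * \<sigma>) s) m) has_real_derivative rc (\<lambda>\<sigma>. Dt u (al + h * \<sigma>) t) m) (at t)" for m
    by (rule rc_deriv[OF u])
  have e: "((\<lambda>s. u (al + h * 1) s) has_real_derivative Dt u (al + h * 1) t) (at t)"
    using sm_dt[OF u, of "[]" "al + h * 1" t] by simp
  have rt: "((\<lambda>s. rtop k (\<lambda>\<sigma>. u (al + h * \<sigma>) s)) has_real_derivative rtop k (\<lambda>\<sigma>. Dt u (al + h * \<sigma>) t)) (at t)"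
    unfolding rtop_def
    by (intro DERIV_cdivide DERIV_diff e DERIV_sum DERIV_cmult_right r)
  show ?thesis unfolding coeff_Proj
    by (intro DERIV_add DERIV_sum DERIV_cmult_right r rt)
qed

lemma poly_sum_k: fixes p :: "real poly" assumes "degree p \<le> k"
  shows "poly p x = (\<Sum>i\<le>k. coeff p i * x ^ i)"
proof -
  have "poly p x = (\<Sum>i\<le>degree p. coeff p i * x ^ i)" by (rule poly_altdef)
  also have "\<dots> = (\<Sum>i\<le>k. coeff p i * x ^ i)"
    by (rule sum.mono_neutral_left) (use assms in \<open>auto simp: coeff_eq_0\<close>)
  finally show ?thesis .
qed

lemma int_prod_expand:
  fixes p q :: "real poly"
  assumes "degree p \<le> k" "degree q \<le> k"
  shows "integral {c..d} (\<lambda>x. poly p x * poly q x)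
       = (\<Sum>i\<le>k. \<Sum>j\<le>k. coeff p i * coeff q j * integral {c..d} (\<lambda>x. x ^ (i + j)))"
proof -
  have "integral {c..d} (\<lambda>x. poly p x * poly q x)
      = integral {c..d} (\<lambda>x. \<Sum>i\<le>k. \<Sum>j\<le>k. coeff p i * coeff q j * x ^ (i + j))"
    by (rule integral_cong)
       (simp add: poly_sum_k[OF assms(1)] poly_sum_k[OF assms(2)] sum_product power_add algebra_simps)
  also have "\<dots> = (\<Sum>i\<le>k. integral {c..d} (\<lambda>x. \<Sum>j\<le>k. coeff p i * coeff q j * x ^ (i + j)))"
    by (rule integral_sum) (auto intro!: integrable_continuous_interval continuous_intros)
  also have "\<dots> = (\<Sum>i\<le>k. \<Sum>j\<le>k. integral {c..d} (\<lambda>x. coeff p i * coeff q j * x ^ (i + j)))"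
    by (intro sum.cong refl integral_sum) (auto intro!: integrable_continuous_interval continuous_intros)
  also have "\<dots> = (\<Sum>i\<le>k. \<Sum>j\<le>k. coeff p i * coeff q j * integral {c..d} (\<lambda>x. x ^ (i + j)))"
    by simp
  finally show ?thesis .
qed

lemma deriv_int_sq:
  fixes p :: "real \<Rightarrow> real poly"
  assumes dg: "\<forall>s\<in>S. degree (p s) \<le> k" and dd: "degree dp \<le> k"
    and d: "\<forall>j. ((\<lambda>s. coeff (p s) j) has_real_derivative coeff dp j) (at t within S)" and t: "t \<in> S"
  shows "((\<lambda>s. integral {c..d} (\<lambda>x. (poly (p s) x)^2)) has_real_derivative
           2 * integral {c..d} (\<lambda>x. poly (p t) x * poly dp x)) (at t within S)"
proof -
  define I where "I n = integral {c..d} (\<lambda>x::real. x ^ n)" for n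
  have F: "((\<lambda>s. \<Sum>i\<le>k. \<Sum>j\<le>k. coeff (p s) i * coeff (p s) j * I (i + j)) has_real_derivative
     (\<Sum>i\<le>k. \<Sum>j\<le>k. (coeff dp i * coeff (p t) j + coeff dp j * coeff (p t) i) * I (i + j))) (at t within S)"
    by (intro DERIV_sum DERIV_cmult_right DERIV_mult d[rule_format])
  have eq: "(\<Sum>i\<le>k. \<Sum>j\<le>k. coeff (p s) i * coeff (p s) j * I (i + j)) = integral {c..d} (\<lambda>x. (poly (p s) x)^2)"
    if "s \<in> S" for s
    using int_prod_expand[OF dg[rule_format, OF that] dg[rule_format, OF that], of c d]
    by (simp add: I_def power2_eq_square)
  have B': "(\<Sum>i\<le>k. \<Sum>j\<le>k. coeff dp j * coeff (p t) i * I (i + j)) = (\<Sum>i\<le>k. \<Sum>j\<le>k. coeff (p t) i * coeff dp j * I (i + j))"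
    by (intro sum.cong refl) simp
  have "(\<Sum>i\<le>k. \<Sum>j\<le>k. (coeff dp i * coeff (p t) j + coeff dp j * coeff (p t) i) * I (i + j))
      = (\<Sum>i\<le>k. \<Sum>j\<le>k. coeff dp i * coeff (p t) j * I (i + j)) + (\<Sum>i\<le>k. \<Sum>j\<le>k. coeff dp j * coeff (p t) i * I (i + j))"
    by (simp only: sum.distrib distrib_right)
  also have "\<dots> = integral {c..d} (\<lambda>x. poly dp x * poly (p t) x) + integral {c..d} (\<lambda>x. poly (p t) x * poly dp x)"
    using int_prod_expand[OF dd dg[rule_format, OF t], of c d] int_prod_expand[OF dg[rule_format, OF t] dd, of c d]
    by (subst B') (simp only: I_def)
  also have "\<dots> = 2 * integral {c..d} (\<lambda>x. poly (p t) x * poly dp x)" by (simp add: mult.commute)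
  finally have v: "(\<Sum>i\<le>k. \<Sum>j\<le>k. (coeff dp i * coeff (p t) j + coeff dp j * coeff (p t) i) * I (i + j))
      = 2 * integral {c..d} (\<lambda>x. poly (p t) x * poly dp x)" .
  show ?thesis
    by (rule has_field_derivative_transform_within[OF F[unfolded v] zero_less_one t]) (simp add: eq)
qed

lemma deriv_within_unique:
  fixes f :: "real \<Rightarrow> real"
  assumes T: "0 < T" and t: "t \<in> {0..T}"
    and d1: "(f has_real_derivative D1) (at t within {0..T})"
    and d2: "(f has_real_derivative D2) (at t within {0..T})"
  shows "D1 = D2"
proof -
  have "(*) D1 = (*) D2"
  proof (rule frechet_derivative_unique_within_closed_interval[of 0 T t f])
    show "\<And>i. i \<in> Basis \<Longrightarrow> 0 \<bullet> i < T \<bullet> i" using T by simp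
    show "t \<in> cbox 0 T" using t by simp
    show "(f has_derivative (*) D1) (at t within cbox 0 T)" using d1 by (simp add: has_field_derivative_def)
    show "(f has_derivative (*) D2) (at t within cbox 0 T)" using d2 by (simp add: has_field_derivative_def)
  qed
  thus ?thesis by (metis mult.right_neutral)
qed

lemma deriv_deg:
  fixes p :: "real \<Rightarrow> real poly"
  assumes T: "0 < T" and t: "t \<in> {0..T}" and dg: "\<forall>s\<in>{0..T}. degree (p s) \<le> k"
    and d: "\<forall>j. ((\<lambda>s. coeff (p s) j) has_real_derivative coeff dp j) (at t within {0..T})"
  shows "degree dp \<le> k"
proof (rule degree_le, intro allI impI)
  fix j assume j: "k < j"
  have "((\<lambda>s. coeff (p s) j) has_real_derivative 0) (at t within {0..T})"
  proof (rule has_field_derivative_transform_within[OF _ zero_less_one t])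
    show "((\<lambda>s. 0) has_real_derivative 0) (at t within {0..T})" by simp
    fix s assume "s \<in> {0..T}"
    hence "degree (p s) < j" using dg j by force
    thus "0 = coeff (p s) j" by (simp add: coeff_eq_0)
  qed
  thus "coeff dp j = 0" using deriv_within_unique[OF T t d[rule_format, of j]] by simp
qed

lemma hh_pos: "a < b \<Longrightarrow> 1 \<le> N \<Longrightarrow> 0 < hh a b N"
  unfolding hh_def by simp

lemma xR_eq: "xR a b N i = xL a b N i + hh a b N"
  unfolding xR_def xL_def by (simp add: algebra_simps)

lemma xL_ge: "a < b \<Longrightarrow> a \<le> xL a b N i"
  unfolding xL_def hh_def by simp

lemma xR_le: assumes "a < b" "i < N" shows "xR a b N i \<le> b"
proof -
  have "real (Suc i) \<le> real N" using assms by simp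
  hence "real (Suc i) * ((b - a) / real N) \<le> real N * ((b - a) / real N)"
    using assms by (intro mult_right_mono) auto
  thus ?thesis using assms unfolding xR_def hh_def by simp
qed

lemma N_h: "1 \<le> N \<Longrightarrow> real N * hh a b N = b - a"
  unfolding hh_def by simp

lemma prv_lt: "1 \<le> N \<Longrightarrow> prv N i < N" unfolding prv_def by simp
lemma nxt_lt: "1 \<le> N \<Longrightarrow> nxt N i < N" unfolding nxt_def by simp

lemma nxt_prv: assumes "i < N" shows "nxt N (prv N i) = i"
proof -
  have N: "1 \<le> N" using assms by simp
  have "Suc ((i + N - 1) mod N) mod N = Suc (i + N - 1) mod N" by (simp add: mod_Suc_eq)
  also have "Suc (i + N - 1) = i + N" using N by simp
  also have "(i + N) mod N = i" using assms by simp
  finally show ?thesis unfolding nxt_def prv_def .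
qed

lemma prv_nxt: assumes "i < N" shows "prv N (nxt N i) = i"
proof (cases "Suc i < N")
  case True
  hence n: "nxt N i = Suc i" unfolding nxt_def by simp
  have e: "Suc i + N - 1 = i + N" by simp
  have "(i + N) mod N = i" using assms by simp
  thus ?thesis unfolding prv_def n e .
next
  case False
  hence "Suc i = N" using assms by simp
  hence n: "nxt N i = 0" unfolding nxt_def by simp
  have "(0 + N - 1) mod N = i" using \<open>Suc i = N\<close> by (metis diff_Suc_1 lessI mod_less add_0)
  thus ?thesis unfolding prv_def n .
qed

lemma prv_bij: assumes "1 \<le> N" shows "bij_betw (prv N) {..<N} {..<N}"
proof (rule bij_betw_imageI)
  show "inj_on (prv N) {..<N}"
  proof (rule inj_onI)
    fix x y assume x: "x \<in> {..<N}" and y: "y \<in> {..<N}" and e: "prv N x = prv N y"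
    have "x = nxt N (prv N x)" by (rule nxt_prv[symmetric]) (use x in simp)
    also have "\<dots> = nxt N (prv N y)" by (simp only: e)
    also have "\<dots> = y" by (rule nxt_prv) (use y in simp)
    finally show "x = y" .
  qed
  show "prv N ` {..<N} = {..<N}"
  proof
    show "prv N ` {..<N} \<subseteq> {..<N}" using prv_lt[OF assms] by auto
    show "{..<N} \<subseteq> prv N ` {..<N}"
    proof
      fix i assume i: "i \<in> {..<N}"
      hence "i = prv N (nxt N i)" by (simp add: prv_nxt)
      moreover have "nxt N i \<in> {..<N}" using nxt_lt[OF assms] by simp
      ultimately show "i \<in> prv N ` {..<N}" by (rule image_eqI)
    qed
  qed
qed

lemma sum_prv: "1 \<le> N \<Longrightarrow> (\<Sum>i<N. f (prv N i)) = (\<Sum>i<N. f i)"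
  using sum.reindex_bij_betw[OF prv_bij, of N f] by simp

lemma sum_nxt: assumes "1 \<le> N" shows "(\<Sum>i<N. f (nxt N i)) = (\<Sum>i<N. f i)"
proof -
  have "(\<Sum>i<N. f (nxt N i)) = (\<Sum>i<N. f (nxt N (prv N i)))" using sum_prv[OF assms, of "\<lambda>i. f (nxt N i)"] by simp
  also have "\<dots> = (\<Sum>i<N. f i)" by (intro sum.cong refl) (simp add: nxt_prv)
  finally show ?thesis .
qed

lemma interface:
  assumes ab: "a < b" and j: "j < N" and per: "\<forall>x. F (x + (b - a)) = F x"
  shows "F (xL a b N (nxt N j)) = F (xR a b N j)"
proof (cases "Suc j < N")
  case True
  hence "nxt N j = Suc j" unfolding nxt_def by simp
  thus ?thesis unfolding xL_def xR_def by simp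
next
  case False
  hence jN: "Suc j = N" using j by simp
  hence "nxt N j = 0" unfolding nxt_def by simp
  moreover have "xR a b N j = a + (b - a)" unfolding xR_def hh_def using jN by simp
  moreover have "F (a + (b - a)) = F a" using per by blast
  ultimately show ?thesis unfolding xL_def by simp
qed

lemma nu_bounds:
  assumes h: "0 < hh a b N" and x: "xL a b N i \<le> x" "x \<le> xR a b N i"
  shows "0 \<le> nu a b N i x" "nu a b N i x \<le> 1"
proof -
  have m: "xM a b N i = xL a b N i + hh a b N / 2" unfolding xM_def xL_def by (simp add: algebra_simps)
  have "x - xM a b N i \<le> hh a b N / 2" "- (hh a b N / 2) \<le> x - xM a b N i"
    using x m xR_eq[of a b N i] by linarith+
  hence "\<bar>x - xM a b N i\<bar> \<le> hh a b N / 2" by (simp only: abs_le_iff) auto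
  hence sq: "(x - xM a b N i)^2 \<le> (hh a b N / 2)^2"
    using h abs_le_square_iff[of "x - xM a b N i" "hh a b N / 2"] by simp
  have p: "0 < (hh a b N / 2)^2" using h by simp
  have "((x - xM a b N i) / (hh a b N / 2))\<^sup>2 = (x - xM a b N i)^2 / (hh a b N / 2)^2"
    by (simp only: power_divide)
  also have "\<dots> \<le> 1" using sq p by (simp only: divide_le_eq_1_pos)
  finally have "((x - xM a b N i) / (hh a b N / 2))\<^sup>2 \<le> 1" .
  thus "0 \<le> nu a b N i x" "nu a b N i x \<le> 1" unfolding nu_def by auto
qed

lemma fhat_eq: "fhat a b N U j = poly (U j) (xR a b N j)"
  unfolding fhat_def tr_m_def by (simp add: field_simps)

lemma ibp:
  fixes f :: "real \<Rightarrow> real"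
  assumes lr: "l \<le> r" and d: "\<And>x. DERIV f x :> f' x" and c: "continuous_on {l..r} f'"
  shows "integral {l..r} (\<lambda>x. f' x * poly p x) = f r * poly p r - f l * poly p l - integral {l..r} (\<lambda>x. f x * poly (pderiv p) x)"
proof -
  have cf: "continuous_on {l..r} f" using d by (meson DERIV_isCont continuous_at_imp_continuous_on)
  have "((\<lambda>x. f' x * poly p x + f x * poly (pderiv p) x) has_integral (f r * poly p r - f l * poly p l)) {l..r}"
  proof (rule fundamental_theorem_of_calculus[OF lr])
    fix x assume "x \<in> {l..r}"
    have "((\<lambda>x. f x * poly p x) has_real_derivative f' x * poly p x + f x * poly (pderiv p) x) (at x)"
      using DERIV_mult[OF d poly_DERIV] by (simp add: mult.commute)
    thus "((\<lambda>x. f x * poly p x) has_vector_derivative f' x * poly p x + f x * poly (pderiv p) x) (at x within {l..r})"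
      by (simp add: has_real_derivative_iff_has_vector_derivative has_vector_derivative_at_within)
  qed
  hence "integral {l..r} (\<lambda>x. f' x * poly p x + f x * poly (pderiv p) x) = f r * poly p r - f l * poly p l"
    by (rule integral_unique)
  moreover have "integral {l..r} (\<lambda>x. f' x * poly p x + f x * poly (pderiv p) x)
      = integral {l..r} (\<lambda>x. f' x * poly p x) + integral {l..r} (\<lambda>x. f x * poly (pderiv p) x)"
    by (rule integral_add) (auto intro!: integrable_continuous_interval continuous_intros c cf)
  ultimately show ?thesis by simp
qed

lemma int_pp':
  fixes p :: "real poly" assumes lr: "l \<le> r"
  shows "integral {l..r} (\<lambda>x. poly p x * poly (pderiv p) x) = ((poly p r)^2 - (poly p l)^2) / 2"
proof -
  have "((\<lambda>x. poly p x * poly (pderiv p) x) has_integral ((poly p r)^2 / 2 - (poly p l)^2 / 2)) {l..r}"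
  proof (rule fundamental_theorem_of_calculus[OF lr, where f="\<lambda>x. (poly p x)^2 / 2"])
    fix x assume "x \<in> {l..r}"
    have "((\<lambda>x. (poly p x)^2 / 2) has_real_derivative poly p x * poly (pderiv p) x) (at x)"
      by (auto intro!: derivative_eq_intros poly_DERIV simp: power2_eq_square)
    thus "((\<lambda>x. (poly p x)^2 / 2) has_vector_derivative poly p x * poly (pderiv p) x) (at x within {l..r})"
      by (simp add: has_real_derivative_iff_has_vector_derivative has_vector_derivative_at_within)
  qed
  thus ?thesis by (simp add: integral_unique diff_divide_distrib)
qed

lemma amgm: fixes P X Y :: real assumes "0 \<le> P" "0 \<le> X" "0 \<le> Y" "P^2 \<le> X * Y" shows "P \<le> (X + Y) / 2"
proof -
  have e: "((X + Y) / 2)^2 - X * Y = ((X - Y) / 2)^2" by (simp add: power2_eq_square field_simps)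
  have "X * Y \<le> ((X + Y) / 2)^2" using e zero_le_power2[of "(X - Y) / 2"] by linarith
  hence "P^2 \<le> ((X + Y) / 2)^2" using assms by linarith
  thus ?thesis using assms by (simp add: power2_le_iff_abs_le)
qed

context
  fixes a b c0 C :: real and k N :: nat and u :: "real \<Rightarrow> real \<Rightarrow> real"
    and U dU :: "nat \<Rightarrow> real poly" and t B Ci Ce :: real
  assumes ab: "a < b" and k1: "1 \<le> k" and c0: "0 < c0" and C1: "1 < C" and sm: "smooth2 u"
    and pde: "\<forall>x. Dt u x t + Dx u x t = 0"
    and per: "\<forall>x s. u (x + (b - a)) s = u x s"
    and N1: "1 \<le> N"
    and degU: "\<forall>i<N. degree (U i) \<le> k" and degdU: "\<forall>i<N. degree (dU i) \<le> k"
    and sch: "\<forall>i<N. \<forall>w. degree w \<le> k \<longrightarrow> noes_eq c0 C k a b N U dU i w"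
    and Bb: "\<forall>m x. m \<le> k + 2 \<longrightarrow> a \<le> x \<longrightarrow> x \<le> b \<longrightarrow> \<bar>Dn u m x t\<bar> \<le> B" and B0: "0 \<le> B"
    and Ci0: "0 < Ci"
    and INVp: "\<forall>al h (p::real poly) l x. 0 < h \<longrightarrow> degree p \<le> k \<longrightarrow> l \<le> k \<longrightarrow> al \<le> x \<longrightarrow> x \<le> al + h \<longrightarrow>
        (poly ((pderiv ^^ l) p) x)^2 * h ^ (2 * l + 1) \<le> Ci * integral {al..al + h} (\<lambda>x. (poly p x)^2)"
    and Ce0: "0 < Ce"
    and E1p: "\<forall>al h fd B x. 0 < h \<longrightarrow> (\<forall>m y. DERIV (fd m) y :> fd (Suc m) y) \<longrightarrow>
        (\<forall>y. al \<le> y \<and> y \<le> al + h \<longrightarrow> \<bar>fd (Suc k) y\<bar> \<le> B) \<longrightarrow> al \<le> x \<longrightarrow> x \<le> al + h \<longrightarrow>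
        \<bar>fd 0 x - poly (Proj k al h (fd 0)) x\<bar> \<le> Ce * B * h ^ Suc k"
begin

definition "h = hh a b N"
definition "KL i = xL a b N i"
definition "P i = Proj k (KL i) h (\<lambda>x. u x t)"
definition "dP i = Proj k (KL i) h (\<lambda>x. Dt u x t)"
definition "xi i = P i - U i"
definition "dxi i = dP i - dU i"
definition "n2 i = integral {KL i..KL i + h} (\<lambda>x. (poly (xi i) x)^2)"
definition "fdu m y = Dn u m y t"
definition "TR i = Tay fdu (KL i + h) k"
definition "TL i = Tay fdu (KL i) k"
definition "QR i = integral {KL i..KL i + h} (\<lambda>x. (poly (U i - TR i) x)^2)"
definition "QL i = integral {KL i..KL i + h} (\<lambda>x. (poly (U i - TL i) x)^2)"

lemma h0: "0 < h" unfolding h_def using hh_pos[OF ab N1] .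

lemma xR_KL: "xR a b N i = KL i + h" unfolding KL_def h_def by (rule xR_eq)

lemma cell_in: assumes "i < N" "KL i \<le> x" "x \<le> KL i + h" shows "a \<le> x" "x \<le> b"
  using xL_ge[OF ab, of N i] xR_le[OF ab assms(1)] assms unfolding KL_def h_def xR_eq by auto

lemma hb: "h \<le> b - a"
proof -
  have "h * 1 \<le> h * real N" using h0 N1 by (intro mult_left_mono) auto
  thus ?thesis using N_h[OF N1, of a b] unfolding h_def by (simp add: mult.commute)
qed

lemma fdu_deriv: "\<forall>m y. DERIV (fdu m) y :> fdu (Suc m) y"
  unfolding fdu_def using Dn_deriv[OF sm] by blast

lemma fdu_bound: "i < N \<Longrightarrow> m \<le> k + 2 \<Longrightarrow> KL i \<le> y \<Longrightarrow> y \<le> KL i + h \<Longrightarrow> \<bar>fdu m y\<bar> \<le> B"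
  unfolding fdu_def using Bb cell_in by blast

lemma approx_u: assumes i: "i < N" and x: "KL i \<le> x" "x \<le> KL i + h"
  shows "\<bar>u x t - poly (P i) x\<bar> \<le> Ce * B * h ^ Suc k"
proof -
  have "\<bar>fdu 0 x - poly (Proj k (KL i) h (fdu 0)) x\<bar> \<le> Ce * B * h ^ Suc k"
    using E1p h0 fdu_deriv fdu_bound[OF i] x by simp
  moreover have "fdu 0 = (\<lambda>x. u x t)" unfolding fdu_def by (simp add: Dn_0)
  ultimately show ?thesis unfolding P_def by simp
qed

definition "fdt m y = - Dn u (Suc m) y t"

lemma approx_ut: assumes i: "i < N" and x: "KL i \<le> x" "x \<le> KL i + h"
  shows "\<bar>Dt u x t - poly (dP i) x\<bar> \<le> Ce * B * h ^ Suc k"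
proof -
  have d: "\<forall>m y. DERIV (fdt m) y :> fdt (Suc m) y"
    unfolding fdt_def using Dn_deriv[OF sm] by (auto intro!: derivative_intros)
  have bd: "\<forall>y. KL i \<le> y \<and> y \<le> KL i + h \<longrightarrow> \<bar>fdt (Suc k) y\<bar> \<le> B"
    unfolding fdt_def using Bb cell_in[OF i] by simp
  have "\<bar>fdt 0 x - poly (Proj k (KL i) h (fdt 0)) x\<bar> \<le> Ce * B * h ^ Suc k"
    using E1p h0 d bd x by blast
  moreover have "fdt 0 = (\<lambda>x. Dt u x t)"
  proof
    fix x
    have "Dt u x t + Dx u x t = 0" using pde by blast
    thus "fdt 0 x = Dt u x t" unfolding fdt_def by (simp add: Dn_Suc Dn_0)
  qed
  ultimately show ?thesis unfolding dP_def by simp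
qed

lemma tay_err: assumes i: "i < N" and x: "KL i \<le> x" "x \<le> KL i + h" and c: "KL i \<le> c" "c \<le> KL i + h"
  shows "\<bar>u x t - poly (Tay fdu c k) x\<bar> \<le> B * h ^ Suc k"
proof -
  have "\<bar>fdu 0 x - poly (Tay fdu c k) x\<bar> \<le> B * \<bar>x - c\<bar> ^ Suc k / fact (Suc k)"
    by (rule Tay_err[OF fdu_deriv _ c x]) (use fdu_bound[OF i] in auto)
  also have "\<dots> \<le> B * \<bar>x - c\<bar> ^ Suc k"
    using frac_le[of "B * \<bar>x - c\<bar> ^ Suc k" "B * \<bar>x - c\<bar> ^ Suc k" 1 "fact (Suc k)"] B0 fact_ge_1[of "Suc k"] by simp
  also have "\<dots> \<le> B * h ^ Suc k"
    using x c B0 by (intro mult_left_mono power_mono) auto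
  finally show ?thesis unfolding fdu_def by (simp add: Dn_0)
qed

definition "ep = (Ce + 1) * B * h ^ Suc k"

lemma ep0: "0 \<le> ep" unfolding ep_def using Ce0 B0 h0 by simp

lemma P_TR: assumes i: "i < N" and x: "KL i \<le> x" "x \<le> KL i + h"
  shows "\<bar>poly (P i) x - poly (TR i) x\<bar> \<le> ep" "\<bar>poly (P i) x - poly (TL i) x\<bar> \<le> ep"
proof -
  have a: "\<bar>u x t - poly (P i) x\<bar> \<le> Ce * B * h ^ Suc k" by (rule approx_u[OF i x])
  have "\<bar>u x t - poly (TR i) x\<bar> \<le> B * h ^ Suc k" unfolding TR_def
    by (rule tay_err[OF i x]) (use h0 in auto)
  with a show "\<bar>poly (P i) x - poly (TR i) x\<bar> \<le> ep" unfolding ep_def by (simp add: algebra_simps)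
  have "\<bar>u x t - poly (TL i) x\<bar> \<le> B * h ^ Suc k" unfolding TL_def
    by (rule tay_err[OF i x]) (use h0 in auto)
  with a show "\<bar>poly (P i) x - poly (TL i) x\<bar> \<le> ep" unfolding ep_def by (simp add: algebra_simps)
qed

lemma int_const: "0 \<le> h' \<Longrightarrow> integral {l..l + h'} (\<lambda>x. c) = h' * (c::real)"
  by simp

lemma int_le: fixes f g :: "real \<Rightarrow> real"
  assumes "continuous_on {l..r} f" "continuous_on {l..r} g" "\<And>x. l \<le> x \<Longrightarrow> x \<le> r \<Longrightarrow> f x \<le> g x"
  shows "integral {l..r} f \<le> integral {l..r} g"
  by (rule integral_le) (use assms in \<open>auto intro: integrable_continuous_interval\<close>)

lemma Q_bound_gen: assumes i: "i < N"
  and T: "\<And>x. KL i \<le> x \<Longrightarrow> x \<le> KL i + h \<Longrightarrow> \<bar>poly (P i) x - poly Tp x\<bar> \<le> ep"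
  shows "integral {KL i..KL i + h} (\<lambda>x. (poly (U i - Tp) x)^2) \<le> 2 * n2 i + 2 * h * ep^2"
proof -
  have "integral {KL i..KL i + h} (\<lambda>x. (poly (U i - Tp) x)^2)
      \<le> integral {KL i..KL i + h} (\<lambda>x. 2 * (poly (xi i) x)^2 + 2 * ep^2)"
  proof (rule int_le)
    show "continuous_on {KL i..KL i + h} (\<lambda>x. (poly (U i - Tp) x)^2)" by (intro continuous_intros)
    show "continuous_on {KL i..KL i + h} (\<lambda>x. 2 * (poly (xi i) x)^2 + 2 * ep^2)" by (intro continuous_intros)
    fix x assume x: "KL i \<le> x" "x \<le> KL i + h"
    have e: "poly (U i - Tp) x = (poly (P i) x - poly Tp x) - poly (xi i) x"
      unfolding xi_def by simp
    have "(poly (P i) x - poly Tp x)^2 \<le> ep^2"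
      using T[OF x] ep0 by (simp add: abs_le_square_iff[symmetric])
    moreover have "(A - X)^2 \<le> 2 * A^2 + 2 * X^2" for A X :: real
      using zero_le_power2[of "A + X"] by (simp add: power2_eq_square algebra_simps)
    ultimately show "(poly (U i - Tp) x)^2 \<le> 2 * (poly (xi i) x)^2 + 2 * ep^2"
      unfolding e by (smt (verit))
  qed
  also have "\<dots> = 2 * n2 i + 2 * h * ep^2"
    unfolding n2_def using h0
    by (subst integral_add) (auto intro!: integrable_continuous_interval continuous_intros)
  finally show ?thesis .
qed

lemma QR_bound: "i < N \<Longrightarrow> QR i \<le> 2 * n2 i + 2 * h * ep^2"
  unfolding QR_def by (rule Q_bound_gen) (auto intro: P_TR)

lemma QL_bound: "i < N \<Longrightarrow> QL i \<le> 2 * n2 i + 2 * h * ep^2"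
  unfolding QL_def by (rule Q_bound_gen) (auto intro: P_TR)

definition "G1 = sqrt Ci * B * (Ce * (b - a) ^ k + 1)"

lemma G1_bound: assumes i: "i < N" and x: "KL i \<le> x" "x \<le> KL i + h"
  shows "\<bar>poly (pderiv (P i)) x\<bar> \<le> G1"
proof -
  define T0 where "T0 = Tay fdu (KL i + h) 0"
  define p where "p = P i - T0"
  define M where "M = (Ce * h ^ k + 1) * B * h"
  have dT0: "degree T0 = 0" unfolding T0_def using deg_Tay[of fdu "KL i + h" 0] by simp
  have pp: "pderiv p = pderiv (P i)"
    unfolding p_def pderiv_diff using dT0 by (simp add: pderiv_eq_0_iff)
  have dp: "degree p \<le> k" unfolding p_def
    by (rule degree_diff_le) (use Proj_deg[OF h0] dT0 P_def in auto)
  have pb: "\<bar>poly p y\<bar> \<le> M" if y: "KL i \<le> y" "y \<le> KL i + h" for y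
  proof -
    have a: "\<bar>u y t - poly (P i) y\<bar> \<le> Ce * B * h ^ Suc k" by (rule approx_u[OF i y])
    have "\<bar>fdu 0 y - poly T0 y\<bar> \<le> B * \<bar>y - (KL i + h)\<bar> ^ Suc 0 / fact (Suc 0)"
      unfolding T0_def by (rule Tay_err[OF fdu_deriv _ _ _ y]) (use fdu_bound[OF i] h0 in auto)
    also have "\<dots> \<le> B * h" using y B0 by (simp add: mult_left_mono)
    finally have "\<bar>u y t - poly T0 y\<bar> \<le> B * h" unfolding fdu_def by (simp add: Dn_0)
    with a show ?thesis unfolding p_def M_def by (simp add: algebra_simps)
  qed
  have M0: "0 \<le> M" unfolding M_def using B0 h0 Ce0 by simp
  have "(poly ((pderiv ^^ 1) p) x)^2 * h ^ (2 * 1 + 1) \<le> Ci * integral {KL i..KL i + h} (\<lambda>x. (poly p x)^2)"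
    using INVp h0 dp k1 x by blast
  also have "\<dots> \<le> Ci * integral {KL i..KL i + h} (\<lambda>x. M^2)"
  proof (intro mult_left_mono int_le)
    fix y assume "KL i \<le> y" "y \<le> KL i + h"
    thus "(poly p y)^2 \<le> M^2" using pb M0 by (simp add: abs_le_square_iff[symmetric])
  qed (use Ci0 in \<open>auto intro!: continuous_intros\<close>)
  also have "\<dots> = Ci * (h * M^2)" using h0 by simp
  finally have "(poly (pderiv (P i)) x)^2 * h^3 \<le> Ci * (h * M^2)" using pp by simp
  hence "(poly (pderiv (P i)) x)^2 * h^2 * h \<le> (Ci * ((Ce * h ^ k + 1) * B)^2 * h^2) * h"
    unfolding M_def by (simp add: power2_eq_square power3_eq_cube algebra_simps)
  hence "(poly (pderiv (P i)) x)^2 * h^2 \<le> (Ci * ((Ce * h ^ k + 1) * B)^2) * h^2"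
    using h0 by (simp add: mult_le_cancel_right)
  hence s: "(poly (pderiv (P i)) x)^2 \<le> Ci * ((Ce * h ^ k + 1) * B)^2"
    using h0 by (simp add: mult_le_cancel_right)
  have "\<bar>poly (pderiv (P i)) x\<bar> = sqrt ((poly (pderiv (P i)) x)^2)" by simp
  also have "\<dots> \<le> sqrt (Ci * ((Ce * h ^ k + 1) * B)^2)" by (rule real_sqrt_le_mono[OF s])
  also have "\<dots> = sqrt Ci * ((Ce * h ^ k + 1) * B)" using B0 Ce0 h0 by (simp add: real_sqrt_mult)
  also have "\<dots> \<le> G1" unfolding G1_def
  proof -
    have "h ^ k \<le> (b - a) ^ k" using hb h0 by (intro power_mono) auto
    hence "(Ce * h ^ k + 1) * B \<le> (Ce * (b - a) ^ k + 1) * B"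
      using Ce0 B0 by (intro mult_right_mono) auto
    from mult_left_mono[OF this, of "sqrt Ci"]
    show "sqrt Ci * ((Ce * h ^ k + 1) * B) \<le> sqrt Ci * B * (Ce * (b - a) ^ k + 1)"
      using Ci0 by (simp add: algebra_simps)
  qed
  finally show ?thesis .
qed

lemma KL_nxt: assumes p: "\<forall>x. F (x + (b - a)) = F x" and j: "j < N"
  shows "F (KL (nxt N j)) = F (KL j + h)"
proof -
  have e: "F (xL a b N (nxt N j)) = F (xR a b N j)" by (rule interface[OF ab j p])
  have e1: "KL j + h = xR a b N j" by (simp add: xR_KL)
  have e2: "KL (nxt N j) = xL a b N (nxt N j)" by (simp add: KL_def)
  show ?thesis unfolding e1 e2 by (rule e)
qed

lemma fdu_per: "\<forall>x. fdu l (x + (b - a)) = fdu l x"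
proof
  fix x show "fdu l (x + (b - a)) = fdu l x" unfolding fdu_def by (rule Dn_periodic[OF per])
qed

definition "Ad q y l = \<bar>poly ((pderiv ^^ l) q) y\<bar>"

lemma jmp_bound: assumes j: "j < N" and l: "l \<le> k"
  shows "\<bar>jmp a b N U l j\<bar> \<le> Ad (U (nxt N j) - TL (nxt N j)) (KL (nxt N j)) l + Ad (U j - TR j) (KL j + h) l"
proof -
  have tl: "poly ((pderiv ^^ l) (TL (nxt N j))) (KL (nxt N j)) = fdu l (KL (nxt N j))"
    unfolding TL_def by (rule Tay_at[OF l])
  have tr: "poly ((pderiv ^^ l) (TR j)) (KL j + h) = fdu l (KL j + h)"
    unfolding TR_def by (rule Tay_at[OF l])
  have eq: "fdu l (KL (nxt N j)) = fdu l (KL j + h)" by (rule KL_nxt[OF fdu_per j])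
  have "jmp a b N U l j = poly ((pderiv ^^ l) (U (nxt N j) - TL (nxt N j))) (KL (nxt N j))
        - poly ((pderiv ^^ l) (U j - TR j)) (KL j + h)"
    unfolding jmp_def hpderiv_diff poly_diff tl tr eq KL_def[symmetric] xR_KL by simp
  thus ?thesis unfolding Ad_def by linarith
qed

lemma degxi: "i < N \<Longrightarrow> degree (xi i) \<le> k"
  unfolding xi_def by (rule degree_diff_le) (use degU Proj_deg[OF h0] P_def in auto)

lemma degUT: "i < N \<Longrightarrow> degree (U i - Tay fdu c k) \<le> k"
  by (rule degree_diff_le) (use degU deg_Tay in auto)

lemma prod_bound:
  assumes i: "i < N" and j: "j < N" and q: "degree q \<le> k" and l: "l \<le> k"
    and y: "KL j \<le> y" "y \<le> KL j + h" and x: "KL i \<le> x" "x \<le> KL i + h"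
  shows "h ^ (l + 2) * Ad q y l * \<bar>poly (pderiv (xi i)) x\<bar>
       \<le> (Ci * integral {KL j..KL j + h} (\<lambda>x. (poly q x)^2) + Ci * n2 i) / 2"
proof (rule amgm)
  have nn: "0 \<le> integral {KL j..KL j + h} (\<lambda>x. (poly q x)^2)" "0 \<le> n2 i"
    unfolding n2_def by (auto intro!: integral_nonneg integrable_continuous_interval continuous_intros)
  show "0 \<le> h ^ (l + 2) * Ad q y l * \<bar>poly (pderiv (xi i)) x\<bar>" using h0 unfolding Ad_def by simp
  show "0 \<le> Ci * integral {KL j..KL j + h} (\<lambda>x. (poly q x)^2)" "0 \<le> Ci * n2 i" using nn Ci0 by auto
  have A: "(poly ((pderiv ^^ l) q) y)^2 * h ^ (2 * l + 1) \<le> Ci * integral {KL j..KL j + h} (\<lambda>x. (poly q x)^2)"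
    using INVp h0 q l y by blast
  have X: "(poly ((pderiv ^^ 1) (xi i)) x)^2 * h ^ (2 * 1 + 1) \<le> Ci * n2 i"
    unfolding n2_def using INVp h0 degxi[OF i] k1 x by blast
  have "(h ^ (l + 2) * Ad q y l * \<bar>poly (pderiv (xi i)) x\<bar>)^2
      = ((poly ((pderiv ^^ l) q) y)^2 * h ^ (2 * l + 1)) * ((poly ((pderiv ^^ 1) (xi i)) x)^2 * h ^ (2 * 1 + 1))"
    unfolding Ad_def by (simp add: power_mult_distrib power_add power_mult algebra_simps power2_eq_square)
  also have "\<dots> \<le> (Ci * integral {KL j..KL j + h} (\<lambda>x. (poly q x)^2)) * (Ci * n2 i)"
    by (rule mult_mono[OF A X]) (use nn Ci0 h0 in \<open>auto intro!: mult_nonneg_nonneg\<close>)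
  finally show "(h ^ (l + 2) * Ad q y l * \<bar>poly (pderiv (xi i)) x\<bar>)^2
      \<le> (Ci * integral {KL j..KL j + h} (\<lambda>x. (poly q x)^2)) * (Ci * n2 i)" .
qed

definition "W = 1 + real k * real (k + 1)"

lemma jnorm_nn: "0 \<le> jnorm a b N U l i" unfolding jnorm_def by simp

lemma sigma_bounds: "0 \<le> sigma c0 C k a b N U i"
  "sigma c0 C k a b N U i \<le> C * (c0 * W * (\<Sum>l\<le>k. h ^ (l + 1) * jnorm a b N U l i))"
proof -
  let ?sj = "sigma_jump c0 k a b N U i"
  have sj0: "0 \<le> ?sj" unfolding sigma_jump_def using c0 h0 jnorm_nn
    by (auto intro!: mult_nonneg_nonneg add_nonneg_nonneg sum_nonneg simp: h_def[symmetric])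
  have se: "sigma_ent c0 C C' a b N U i \<le> C * ?sj" if "C' = k" for C'
    unfolding sigma_ent_def that by simp
  show "0 \<le> sigma c0 C k a b N U i" unfolding sigma_def using sj0 by simp
  have "sigma c0 C k a b N U i \<le> C * ?sj" unfolding sigma_def using se[of k] sj0 C1
    by (simp add: mult_le_cancel_right1 order_trans[of _ ?sj])
  also have "?sj \<le> c0 * W * (\<Sum>l\<le>k. h ^ (l + 1) * jnorm a b N U l i)"
  proof -
    have W1: "1 \<le> W" unfolding W_def by simp
    have Wl: "real l * real (l + 1) \<le> W" if "l \<le> k" for l
    proof -
      have "real l * real (l + 1) \<le> real k * real (k + 1)" using that by (intro mult_mono) auto
      thus ?thesis unfolding W_def by simp
    qed
    have "h * jnorm a b N U 0 i + (\<Sum>l=1..k. real l * real (l + 1) * h ^ (l + 1) * jnorm a b N U l i)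
        \<le> W * (h ^ (0 + 1) * jnorm a b N U 0 i) + (\<Sum>l=1..k. W * (h ^ (l + 1) * jnorm a b N U l i))"
    proof (intro add_mono sum_mono)
      show "h * jnorm a b N U 0 i \<le> W * (h ^ (0 + 1) * jnorm a b N U 0 i)"
      proof -
        have X0: "0 \<le> h * jnorm a b N U 0 i" using h0 jnorm_nn[of 0 i] by simp
        show ?thesis using mult_right_mono[OF W1 X0] by simp
      qed
      fix l assume "l \<in> {1..k}"
      hence "real l * real (l + 1) \<le> W" using Wl by simp
      thus "real l * real (l + 1) * h ^ (l + 1) * jnorm a b N U l i \<le> W * (h ^ (l + 1) * jnorm a b N U l i)"
      proof -
        have X0: "0 \<le> h ^ (l + 1) * jnorm a b N U l i" using h0 jnorm_nn[of l i] by simp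
        from mult_right_mono[OF \<open>real l * real (l + 1) \<le> W\<close> X0] show ?thesis by (simp add: mult.assoc)
      qed
    qed
    also have "\<dots> = W * (\<Sum>l\<le>k. h ^ (l + 1) * jnorm a b N U l i)"
    proof -
      have "(\<Sum>l\<le>k. h ^ (l + 1) * jnorm a b N U l i) = h ^ (0 + 1) * jnorm a b N U 0 i + (\<Sum>l=1..k. h ^ (l + 1) * jnorm a b N U l i)"
        by (simp add: atMost_atLeast0 sum.atLeast_Suc_atMost)
      thus ?thesis by (simp add: sum_distrib_left distrib_left)
    qed
    finally show ?thesis unfolding sigma_jump_def h_def[symmetric] using c0
      by (simp add: mult.assoc mult_left_mono)
  qed
  hence "C * ?sj \<le> C * (c0 * W * (\<Sum>l\<le>k. h ^ (l + 1) * jnorm a b N U l i))"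
    using C1 by (intro mult_left_mono) auto
  finally show "sigma c0 C k a b N U i \<le> C * (c0 * W * (\<Sum>l\<le>k. h ^ (l + 1) * jnorm a b N U l i))" .
qed

definition "Ks = C * c0 * W * real (k + 1) * Ci / 2"
definition "S i = QL i + QR (prv N i) + QL (nxt N i) + QR i + 4 * n2 i"

lemma KL_in: "KL j \<le> KL j" "KL j \<le> KL j + h" "KL j + h \<le> KL j + h" using h0 by auto

lemma sig_pt: assumes i: "i < N" and x: "KL i \<le> x" "x \<le> KL i + h"
  shows "h * sigma c0 C k a b N U i * \<bar>poly (pderiv (xi i)) x\<bar> \<le> Ks * S i"
proof -
  define D where "D = \<bar>poly (pderiv (xi i)) x\<bar>"
  have D0: "0 \<le> D" unfolding D_def by simp
  have pi: "prv N i < N" and ni: "nxt N i < N" using prv_lt nxt_lt N1 by auto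
  have npi: "nxt N (prv N i) = i" by (rule nxt_prv[OF i])
  have pb: "h ^ (l + 2) * Ad (U j - Tay fdu c k) y l * D \<le> (Ci * integral {KL j..KL j + h} (\<lambda>x. (poly (U j - Tay fdu c k) x)^2) + Ci * n2 i) / 2"
    if "j < N" "l \<le> k" "KL j \<le> y" "y \<le> KL j + h" for j l y c
    unfolding D_def by (rule prod_bound[OF i that(1) degUT[OF that(1)] that(2-4) x])
  have t: "h ^ (l + 2) * jnorm a b N U l i * D \<le> Ci / 2 * S i" if l: "l \<le> k" for l
  proof -
    have j1: "\<bar>jmp a b N U l (prv N i)\<bar> \<le> Ad (U i - TL i) (KL i) l + Ad (U (prv N i) - TR (prv N i)) (KL (prv N i) + h) l"
      using jmp_bound[OF pi l] unfolding npi .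
    have j2: "\<bar>jmp a b N U l i\<bar> \<le> Ad (U (nxt N i) - TL (nxt N i)) (KL (nxt N i)) l + Ad (U i - TR i) (KL i + h) l"
      by (rule jmp_bound[OF i l])
    have "h ^ (l + 2) * jnorm a b N U l i * D \<le> h ^ (l + 2) * (Ad (U i - TL i) (KL i) l + Ad (U (prv N i) - TR (prv N i)) (KL (prv N i) + h) l
        + Ad (U (nxt N i) - TL (nxt N i)) (KL (nxt N i)) l + Ad (U i - TR i) (KL i + h) l) * D"
      unfolding jnorm_def using j1 j2 h0 D0 by (intro mult_right_mono mult_left_mono) auto
    also have "\<dots> = h ^ (l + 2) * Ad (U i - TL i) (KL i) l * D + h ^ (l + 2) * Ad (U (prv N i) - TR (prv N i)) (KL (prv N i) + h) l * D
        + h ^ (l + 2) * Ad (U (nxt N i) - TL (nxt N i)) (KL (nxt N i)) l * D + h ^ (l + 2) * Ad (U i - TR i) (KL i + h) l * D"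
      by (simp add: algebra_simps)
    also have "\<dots> \<le> (Ci * QL i + Ci * n2 i) / 2 + (Ci * QR (prv N i) + Ci * n2 i) / 2
        + (Ci * QL (nxt N i) + Ci * n2 i) / 2 + (Ci * QR i + Ci * n2 i) / 2"
      unfolding QL_def QR_def TL_def TR_def
      by (intro add_mono pb i pi ni l KL_in)
    also have "\<dots> = Ci / 2 * S i" unfolding S_def by (simp add: field_simps)
    finally show ?thesis .
  qed
  have sb: "sigma c0 C k a b N U i \<le> C * (c0 * W * (\<Sum>l\<le>k. h ^ (l + 1) * jnorm a b N U l i))"
    by (rule sigma_bounds(2))
  have CW: "0 \<le> C * c0 * W" using C1 c0 unfolding W_def by simp
  have "h * sigma c0 C k a b N U i * D \<le> h * (C * (c0 * W * (\<Sum>l\<le>k. h ^ (l + 1) * jnorm a b N U l i))) * D"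
    using sb h0 D0 by (intro mult_right_mono mult_left_mono) auto
  also have "\<dots> = C * c0 * W * (\<Sum>l\<le>k. h ^ (l + 2) * jnorm a b N U l i * D)"
    by (simp add: sum_distrib_left sum_distrib_right algebra_simps power_add)
  also have "\<dots> \<le> C * c0 * W * (\<Sum>l\<le>k. Ci / 2 * S i)"
    by (intro mult_left_mono sum_mono t CW) auto
  also have "\<dots> = Ks * S i" unfolding Ks_def by simp
  finally show ?thesis unfolding D_def .
qed

lemma G1_nn: "0 \<le> G1" unfolding G1_def using Ci0 B0 Ce0 ab by simp

lemma Vint_bound: assumes i: "i < N"
  shows "sigma c0 C k a b N U i * integral {KL i..KL i + h}
           (\<lambda>x. nu a b N i x * poly (pderiv (U i)) x * poly (pderiv (xi i)) x) \<le> G1 * Ks * S i"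
proof -
  let ?s = "sigma c0 C k a b N U i"
  have s0: "0 \<le> ?s" by (rule sigma_bounds(1))
  have cnu: "continuous_on A (nu a b N i)" for A unfolding nu_def
    using hh_pos[OF ab N1] by (intro continuous_intros) auto
  have nub: "0 \<le> nu a b N i x" "nu a b N i x \<le> 1" if "KL i \<le> x" "x \<le> KL i + h" for x
    using nu_bounds[of a b N i x] h0 that unfolding h_def KL_def xR_eq by auto
  have "integral {KL i..KL i + h} (\<lambda>x. nu a b N i x * poly (pderiv (U i)) x * poly (pderiv (xi i)) x)
      \<le> integral {KL i..KL i + h} (\<lambda>x. G1 * \<bar>poly (pderiv (xi i)) x\<bar>)"
  proof (rule int_le)
    show "continuous_on {KL i..KL i + h} (\<lambda>x. nu a b N i x * poly (pderiv (U i)) x * poly (pderiv (xi i)) x)"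
      by (intro continuous_intros cnu)
    show "continuous_on {KL i..KL i + h} (\<lambda>x. G1 * \<bar>poly (pderiv (xi i)) x\<bar>)"
      by (intro continuous_intros)
    fix x assume x: "KL i \<le> x" "x \<le> KL i + h"
    define v where "v = nu a b N i x"
    define p where "p = poly (pderiv (P i)) x"
    define e where "e = poly (pderiv (xi i)) x"
    have pu: "poly (pderiv (U i)) x = p - e" unfolding p_def e_def xi_def by (simp add: pderiv_diff)
    have v: "0 \<le> v" "v \<le> 1" using nub[OF x] unfolding v_def by auto
    have pb: "\<bar>p\<bar> \<le> G1" unfolding p_def by (rule G1_bound[OF i x])
    have "v * (p - e) * e = v * p * e - v * e^2" by (simp add: algebra_simps power2_eq_square)
    also have "\<dots> \<le> v * p * e" using v by simp
    also have "\<dots> \<le> \<bar>v * p * e\<bar>" by simp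
    also have "\<dots> = v * (\<bar>p\<bar> * \<bar>e\<bar>)" using v by (simp add: abs_mult)
    also have "\<dots> \<le> 1 * (\<bar>p\<bar> * \<bar>e\<bar>)" using v by (intro mult_right_mono) auto
    also have "\<dots> \<le> G1 * \<bar>e\<bar>" using pb by (simp add: mult_right_mono)
    finally show "nu a b N i x * poly (pderiv (U i)) x * poly (pderiv (xi i)) x \<le> G1 * \<bar>poly (pderiv (xi i)) x\<bar>"
      unfolding v_def[symmetric] e_def[symmetric] pu .
  qed
  hence "?s * integral {KL i..KL i + h} (\<lambda>x. nu a b N i x * poly (pderiv (U i)) x * poly (pderiv (xi i)) x)
      \<le> ?s * integral {KL i..KL i + h} (\<lambda>x. G1 * \<bar>poly (pderiv (xi i)) x\<bar>)"
    using s0 by (rule mult_left_mono)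
  also have "\<dots> = integral {KL i..KL i + h} (\<lambda>x. ?s * (G1 * \<bar>poly (pderiv (xi i)) x\<bar>))"
    by simp
  also have "\<dots> \<le> integral {KL i..KL i + h} (\<lambda>x. G1 * Ks * S i / h)"
  proof (rule int_le)
    show "continuous_on {KL i..KL i + h} (\<lambda>x. ?s * (G1 * \<bar>poly (pderiv (xi i)) x\<bar>))" by (intro continuous_intros)
    fix x assume x: "KL i \<le> x" "x \<le> KL i + h"
    have "h * ?s * \<bar>poly (pderiv (xi i)) x\<bar> \<le> Ks * S i" by (rule sig_pt[OF i x])
    hence "G1 * (h * ?s * \<bar>poly (pderiv (xi i)) x\<bar>) \<le> G1 * (Ks * S i)" using G1_nn by (rule mult_left_mono)
    thus "?s * (G1 * \<bar>poly (pderiv (xi i)) x\<bar>) \<le> G1 * Ks * S i / h"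
      using h0 by (simp add: field_simps)
  qed auto
  also have "\<dots> = G1 * Ks * S i" using h0 by simp
  finally show ?thesis .
qed

lemma cont_u: "continuous_on A (\<lambda>x. u x t)"
proof -
  have c: "continuous_on UNIV (\<lambda>q::real \<times> real. u (fst q) (snd q))" using sm_cont[OF sm, of UNIV "[]"] by simp
  have cp: "continuous_on A (\<lambda>x::real. (x, t))" by (intro continuous_intros)
  show ?thesis using continuous_on_compose2[OF c cp] by simp
qed

lemma cont_ut: "continuous_on A (\<lambda>x. Dt u x t)"
proof -
  have c: "continuous_on UNIV (\<lambda>q::real \<times> real. Dt u (fst q) (snd q))" using sm_cont[OF sm, of UNIV "[False]"] by simp
  have cp: "continuous_on A (\<lambda>x::real. (x, t))" by (intro continuous_intros)
  show ?thesis using continuous_on_compose2[OF c cp] by simp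
qed

lemma cont_ux: "continuous_on A (\<lambda>x. Dx u x t)"
proof -
  have c: "continuous_on UNIV (\<lambda>q::real \<times> real. Dx u (fst q) (snd q))" using sm_cont[OF sm, of UNIV "[True]"] by simp
  have cp: "continuous_on A (\<lambda>x::real. (x, t))" by (intro continuous_intros)
  show ?thesis using continuous_on_compose2[OF c cp] by simp
qed

lemma int_diff2: fixes f g :: "real \<Rightarrow> real" assumes "continuous_on {l..r} f" "continuous_on {l..r} g"
  shows "integral {l..r} (\<lambda>x. f x - g x) = integral {l..r} f - integral {l..r} g"
  by (rule integral_diff) (use assms in \<open>auto intro: integrable_continuous_interval\<close>)

definition "Eint i = integral {KL i..KL i + h} (\<lambda>x. (Dt u x t - poly (dP i) x) * poly (xi i) x)"
definition "Vint i = sigma c0 C k a b N U i * integral {KL i..KL i + h}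
           (\<lambda>x. nu a b N i x * poly (pderiv (U i)) x * poly (pderiv (xi i)) x)"

lemma cell_id: assumes i: "i < N"
  shows "integral {KL i..KL i + h} (\<lambda>x. poly (xi i) x * poly (dxi i) x)
    = (poly (xi (prv N i)) (KL (prv N i) + h))^2 / 2 - (poly (xi i) (KL i + h))^2 / 2
      - (poly (xi i) (KL i) - poly (xi (prv N i)) (KL (prv N i) + h))^2 / 2 - Eint i + Vint i"
proof -
  define L where "L = KL i"
  define R where "R = KL i + h"
  define pv where "pv = prv N i"
  define Rp where "Rp = KL pv + h"
  define \<xi> where "\<xi> = xi i"
  have LR: "L \<le> R" unfolding L_def R_def using h0 by simp
  have pv: "pv < N" unfolding pv_def using prv_lt[OF N1] .
  have npv: "nxt N pv = i" unfolding pv_def by (rule nxt_prv[OF i])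
  have dx: "degree \<xi> \<le> k" unfolding \<xi>_def by (rule degxi[OF i])
  have cp: "continuous_on {L..R} (poly q)" for q by (intro continuous_intros)
  have "noes_eq c0 C k a b N U dU i \<xi>" using sch i dx by blast
  hence A: "integral {L..R} (\<lambda>x. poly (dU i) x * poly \<xi> x)
     = integral {L..R} (\<lambda>x. poly (U i) x * poly (pderiv \<xi>) x)
       - poly (U i) R * poly \<xi> R + poly (U pv) Rp * poly \<xi> L - Vint i"
    unfolding noes_eq_def fhat_eq Vint_def L_def R_def Rp_def pv_def \<xi>_def xR_KL KL_def[symmetric] by simp
  have Bq: "integral {L..R} (\<lambda>x. poly \<xi> x * poly (dxi i) x)
      = integral {L..R} (\<lambda>x. poly (dP i) x * poly \<xi> x) - integral {L..R} (\<lambda>x. poly (dU i) x * poly \<xi> x)"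
  proof -
    have "integral {L..R} (\<lambda>x. poly \<xi> x * poly (dxi i) x)
        = integral {L..R} (\<lambda>x. poly (dP i) x * poly \<xi> x - poly (dU i) x * poly \<xi> x)"
      unfolding dxi_def by (simp add: algebra_simps)
    also have "\<dots> = integral {L..R} (\<lambda>x. poly (dP i) x * poly \<xi> x) - integral {L..R} (\<lambda>x. poly (dU i) x * poly \<xi> x)"
      by (rule int_diff2) (intro continuous_intros)+
    finally show ?thesis .
  qed
  have Cq: "integral {L..R} (\<lambda>x. poly (dP i) x * poly \<xi> x) = integral {L..R} (\<lambda>x. Dt u x t * poly \<xi> x) - Eint i"
  proof -
    have "Eint i = integral {L..R} (\<lambda>x. Dt u x t * poly \<xi> x - poly (dP i) x * poly \<xi> x)"
      unfolding Eint_def L_def R_def \<xi>_def by (simp add: algebra_simps)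
    also have "\<dots> = integral {L..R} (\<lambda>x. Dt u x t * poly \<xi> x) - integral {L..R} (\<lambda>x. poly (dP i) x * poly \<xi> x)"
      by (rule int_diff2) (intro continuous_intros cont_ut)+
    finally show ?thesis by simp
  qed
  have Dq: "integral {L..R} (\<lambda>x. Dt u x t * poly \<xi> x) = - integral {L..R} (\<lambda>x. Dx u x t * poly \<xi> x)"
  proof -
    have "integral {L..R} (\<lambda>x. Dt u x t * poly \<xi> x) = integral {L..R} (\<lambda>x. - (Dx u x t * poly \<xi> x))"
    proof (rule integral_cong)
      fix x have "Dt u x t + Dx u x t = 0" using pde by blast
      hence "Dt u x t = - Dx u x t" by linarith
      thus "Dt u x t * poly \<xi> x = - (Dx u x t * poly \<xi> x)" by simp
    qed
    thus ?thesis by (simp add: integral_neg)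
  qed
  have Eq: "integral {L..R} (\<lambda>x. Dx u x t * poly \<xi> x)
      = u R t * poly \<xi> R - u L t * poly \<xi> L - integral {L..R} (\<lambda>x. u x t * poly (pderiv \<xi>) x)"
  proof (rule ibp[OF LR _ cont_ux])
    fix x show "((\<lambda>x. u x t) has_real_derivative Dx u x t) (at x)" using sm_dx[OF sm, of "[]" t x] by simp
  qed
  have Fq: "integral {L..R} (\<lambda>x. u x t * poly (pderiv \<xi>) x) = integral {L..R} (\<lambda>x. poly (P i) x * poly (pderiv \<xi>) x)"
  proof -
    have dq: "degree (pderiv \<xi>) < k" using dx k1 by (simp add: degree_pderiv)
    have o: "integral {L..R} (\<lambda>x. (u x t - poly (P i) x) * poly (pderiv \<xi>) x) = 0"
      unfolding P_def L_def R_def by (rule Proj_orth[OF h0 cont_u dq])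
    have "integral {L..R} (\<lambda>x. (u x t - poly (P i) x) * poly (pderiv \<xi>) x)
        = integral {L..R} (\<lambda>x. u x t * poly (pderiv \<xi>) x - poly (P i) x * poly (pderiv \<xi>) x)"
      by (simp add: algebra_simps)
    also have "\<dots> = integral {L..R} (\<lambda>x. u x t * poly (pderiv \<xi>) x) - integral {L..R} (\<lambda>x. poly (P i) x * poly (pderiv \<xi>) x)"
      by (rule int_diff2) (intro continuous_intros cont_u)+
    finally show ?thesis using o by simp
  qed
  have G1q: "u R t = poly (P i) R" unfolding R_def P_def using Proj_R[OF h0, of k "KL i" "\<lambda>x. u x t"] by simp
  have G2q: "u L t = poly (P pv) Rp"
  proof -
    have "u (KL (nxt N pv)) t = u (KL pv + h) t"
      by (rule KL_nxt[where F="\<lambda>x. u x t", OF _ pv]) (use per in blast)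
    also have "\<dots> = poly (P pv) (KL pv + h)" unfolding P_def using Proj_R[OF h0, of k "KL pv" "\<lambda>x. u x t"] by simp
    finally show ?thesis unfolding npv L_def Rp_def .
  qed
  have Hq: "integral {L..R} (\<lambda>x. poly (P i) x * poly (pderiv \<xi>) x) - integral {L..R} (\<lambda>x. poly (U i) x * poly (pderiv \<xi>) x)
      = ((poly \<xi> R)^2 - (poly \<xi> L)^2) / 2"
  proof -
    have "integral {L..R} (\<lambda>x. poly (P i) x * poly (pderiv \<xi>) x) - integral {L..R} (\<lambda>x. poly (U i) x * poly (pderiv \<xi>) x)
        = integral {L..R} (\<lambda>x. poly (P i) x * poly (pderiv \<xi>) x - poly (U i) x * poly (pderiv \<xi>) x)"
      by (rule int_diff2[symmetric]) (intro continuous_intros)+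
    also have "\<dots> = integral {L..R} (\<lambda>x. poly \<xi> x * poly (pderiv \<xi>) x)"
      unfolding \<xi>_def xi_def by (simp add: algebra_simps)
    also have "\<dots> = ((poly \<xi> R)^2 - (poly \<xi> L)^2) / 2" by (rule int_pp'[OF LR])
    finally show ?thesis .
  qed
  have xR: "poly \<xi> R = poly (P i) R - poly (U i) R" unfolding \<xi>_def xi_def by simp
  have xp: "poly (xi pv) Rp = poly (P pv) Rp - poly (U pv) Rp" unfolding xi_def by simp
  define IP where "IP = integral {L..R} (\<lambda>x. poly (P i) x * poly (pderiv \<xi>) x)"
  define IU where "IU = integral {L..R} (\<lambda>x. poly (U i) x * poly (pderiv \<xi>) x)"
  have s1: "integral {L..R} (\<lambda>x. poly \<xi> x * poly (dxi i) x)
      = - (u R t * poly \<xi> R - u L t * poly \<xi> L - IP) - Eint i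
        - (IU - poly (U i) R * poly \<xi> R + poly (U pv) Rp * poly \<xi> L - Vint i)"
    using Bq Cq Dq Eq Fq A unfolding IP_def IU_def by linarith
  also have "\<dots> = - (poly (P i) R - poly (U i) R) * poly \<xi> R + (poly (P pv) Rp - poly (U pv) Rp) * poly \<xi> L
        + (IP - IU) - Eint i + Vint i"
    unfolding G1q G2q by (simp add: algebra_simps)
  also have "\<dots> = - poly \<xi> R * poly \<xi> R + poly (xi pv) Rp * poly \<xi> L + ((poly \<xi> R)^2 - (poly \<xi> L)^2) / 2 - Eint i + Vint i"
    unfolding xR[symmetric] xp[symmetric] Hq[folded IP_def IU_def] by simp
  also have "\<dots> = (poly (xi pv) Rp)^2 / 2 - (poly \<xi> R)^2 / 2 - (poly \<xi> L - poly (xi pv) Rp)^2 / 2 - Eint i + Vint i"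
    by (simp add: power2_eq_square field_simps)
  finally have "integral {L..R} (\<lambda>x. poly \<xi> x * poly (dxi i) x)
      = (poly (xi pv) Rp)^2 / 2 - (poly \<xi> R)^2 / 2 - (poly \<xi> L - poly (xi pv) Rp)^2 / 2 - Eint i + Vint i" .
  thus ?thesis unfolding L_def R_def \<xi>_def pv_def Rp_def .
qed

lemma E_bound: assumes i: "i < N" shows "- Eint i \<le> h * (Ce * B * h ^ Suc k)^2 / 2 + n2 i / 2"
proof -
  define \<epsilon> where "\<epsilon> = Ce * B * h ^ Suc k"
  have "- Eint i = integral {KL i..KL i + h} (\<lambda>x. - ((Dt u x t - poly (dP i) x) * poly (xi i) x))"
    unfolding Eint_def by (simp add: integral_neg)
  also have "\<dots> \<le> integral {KL i..KL i + h} (\<lambda>x. \<epsilon>^2 / 2 + (poly (xi i) x)^2 / 2)"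
  proof (rule int_le)
    show "continuous_on {KL i..KL i + h} (\<lambda>x. - ((Dt u x t - poly (dP i) x) * poly (xi i) x))"
      by (intro continuous_intros cont_ut)
    show "continuous_on {KL i..KL i + h} (\<lambda>x. \<epsilon>^2 / 2 + (poly (xi i) x)^2 / 2)" by (intro continuous_intros) auto
    fix x assume x: "KL i \<le> x" "x \<le> KL i + h"
    define e where "e = Dt u x t - poly (dP i) x"
    have "\<bar>e\<bar> \<le> \<epsilon>" unfolding e_def \<epsilon>_def by (rule approx_ut[OF i x])
    hence "e^2 \<le> \<epsilon>^2" by (simp add: abs_le_square_iff[symmetric] order_trans[OF abs_ge_zero])
    moreover have "- (e * poly (xi i) x) \<le> e^2 / 2 + (poly (xi i) x)^2 / 2"
      using zero_le_power2[of "e + poly (xi i) x"] by (simp add: power2_eq_square algebra_simps)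
    ultimately show "- ((Dt u x t - poly (dP i) x) * poly (xi i) x) \<le> \<epsilon>^2 / 2 + (poly (xi i) x)^2 / 2"
      unfolding e_def[symmetric] by linarith
  qed
  also have "\<dots> = h * \<epsilon>^2 / 2 + n2 i / 2"
    unfolding n2_def using h0
    by (subst integral_add) (auto intro!: integrable_continuous_interval continuous_intros)
  finally show ?thesis unfolding \<epsilon>_def .
qed

definition "Acst = 1 + 24 * G1 * Ks + (b - a) * Ce^2 * B^2 + 16 * G1 * Ks * (b - a) * (Ce + 1)^2 * B^2"

lemma Ks_nn: "0 \<le> Ks" unfolding Ks_def W_def using C1 c0 Ci0 by simp

lemma n2_nn: "0 \<le> n2 i" unfolding n2_def by (auto intro!: integral_nonneg integrable_continuous_interval continuous_intros)

lemma main_ineq: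
  "2 * (\<Sum>i<N. integral {KL i..KL i + h} (\<lambda>x. poly (xi i) x * poly (dxi i) x))
     \<le> Acst * ((\<Sum>i<N. n2 i) + h ^ (2 * k + 2))"
proof -
  define \<Phi> where "\<Phi> = (\<Sum>i<N. n2 i)"
  define H where "H = h ^ (2 * k + 2)"
  define sq where "sq i = (poly (xi i) (KL i) - poly (xi (prv N i)) (KL (prv N i) + h))^2 / 2" for i
  define ar where "ar j = (poly (xi j) (KL j + h))^2 / 2" for j
  have \<Phi>0: "0 \<le> \<Phi>" unfolding \<Phi>_def by (intro sum_nonneg n2_nn)
  have H0: "0 \<le> H" unfolding H_def using h0 by simp
  have Nh: "real N * h = b - a" unfolding h_def by (rule N_h[OF N1])
  have "(\<Sum>i<N. integral {KL i..KL i + h} (\<lambda>x. poly (xi i) x * poly (dxi i) x))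
      = (\<Sum>i<N. ar (prv N i) - ar i - sq i - Eint i + Vint i)"
    by (intro sum.cong refl) (simp add: cell_id ar_def sq_def)
  also have "\<dots> \<le> (\<Sum>i<N. ar (prv N i) - ar i + (h * (Ce * B * h ^ Suc k)^2 / 2 + n2 i / 2) + G1 * Ks * S i)"
  proof (rule sum_mono)
    fix i assume "i \<in> {..<N}"
    hence i: "i < N" by simp
    have "0 \<le> sq i" unfolding sq_def by simp
    moreover have "- Eint i \<le> h * (Ce * B * h ^ Suc k)^2 / 2 + n2 i / 2" by (rule E_bound[OF i])
    moreover have "Vint i \<le> G1 * Ks * S i" unfolding Vint_def by (rule Vint_bound[OF i])
    ultimately show "ar (prv N i) - ar i - sq i - Eint i + Vint i
        \<le> ar (prv N i) - ar i + (h * (Ce * B * h ^ Suc k)^2 / 2 + n2 i / 2) + G1 * Ks * S i" by linarith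
  qed
  also have "\<dots> = ((\<Sum>i<N. ar (prv N i)) - (\<Sum>i<N. ar i)) + real N * (h * (Ce * B * h ^ Suc k)^2 / 2) + \<Phi> / 2
       + G1 * Ks * (\<Sum>i<N. S i)"
    unfolding \<Phi>_def by (simp add: sum.distrib sum_subtractf sum_distrib_left sum_divide_distrib)
  also have "(\<Sum>i<N. ar (prv N i)) = (\<Sum>i<N. ar i)" by (rule sum_prv[OF N1])
  also have "real N * (h * (Ce * B * h ^ Suc k)^2 / 2) = (real N * h) * (Ce^2 * B^2 * (h ^ Suc k)^2 / 2)"
    by (simp add: power_mult_distrib)
  also have "(h ^ Suc k)^2 = H" unfolding H_def power_mult[symmetric] by (simp add: mult.commute)
  also have "(real N * h) * (Ce^2 * B^2 * H / 2) = (b - a) * Ce^2 * B^2 * H / 2" unfolding Nh by simp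
  finally have s1: "(\<Sum>i<N. integral {KL i..KL i + h} (\<lambda>x. poly (xi i) x * poly (dxi i) x))
      \<le> (b - a) * Ce^2 * B^2 * H / 2 + \<Phi> / 2 + G1 * Ks * (\<Sum>i<N. S i)" by simp
  have SS: "(\<Sum>i<N. S i) \<le> 12 * \<Phi> + 8 * (b - a) * (Ce + 1)^2 * B^2 * H"
  proof -
    have "(\<Sum>i<N. S i) = 2 * (\<Sum>i<N. QL i) + 2 * (\<Sum>i<N. QR i) + 4 * \<Phi>"
      unfolding S_def \<Phi>_def
      by (simp add: sum.distrib sum_distrib_left sum_prv[OF N1, of QR] sum_nxt[OF N1, of QL])
    also have "\<dots> \<le> 2 * (\<Sum>i<N. 2 * n2 i + 2 * h * ep^2) + 2 * (\<Sum>i<N. 2 * n2 i + 2 * h * ep^2) + 4 * \<Phi>"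
      by (intro add_mono mult_left_mono sum_mono QL_bound QR_bound) auto
    also have "\<dots> = 12 * \<Phi> + 8 * (real N * h) * ep^2"
    proof -
      have "(\<Sum>i<N. 2 * n2 i + 2 * h * ep^2) = 2 * \<Phi> + 2 * (real N * h) * ep^2"
        unfolding \<Phi>_def by (simp add: sum.distrib flip: sum_distrib_left)
      thus ?thesis by (simp add: algebra_simps)
    qed
    also have "8 * (real N * h) * ep^2 = 8 * (b - a) * (Ce + 1)^2 * B^2 * H"
      unfolding Nh ep_def H_def by (simp add: power_mult_distrib power_add power_mult algebra_simps power2_eq_square)
    finally show ?thesis .
  qed
  have GK: "0 \<le> G1 * Ks" using G1_nn Ks_nn by simp
  have "2 * (\<Sum>i<N. integral {KL i..KL i + h} (\<lambda>x. poly (xi i) x * poly (dxi i) x))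
      \<le> (b - a) * Ce^2 * B^2 * H + \<Phi> + 2 * (G1 * Ks) * (12 * \<Phi> + 8 * (b - a) * (Ce + 1)^2 * B^2 * H)"
    using s1 mult_left_mono[OF SS GK] by linarith
  also have "\<dots> \<le> Acst * (\<Phi> + H)"
  proof -
    have ba: "0 \<le> b - a" using ab by simp
    have "(b - a) * Ce^2 * B^2 * H + \<Phi> + 2 * (G1 * Ks) * (12 * \<Phi> + 8 * (b - a) * (Ce + 1)^2 * B^2 * H)
        = (1 + 24 * G1 * Ks) * \<Phi> + ((b - a) * Ce^2 * B^2 + 16 * G1 * Ks * (b - a) * (Ce + 1)^2 * B^2) * H"
      by (simp add: algebra_simps)
    also have "\<dots> \<le> Acst * \<Phi> + Acst * H"
    proof (intro add_mono mult_right_mono \<Phi>0 H0)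
      have x: "0 \<le> (b - a) * Ce^2 * B^2" "0 \<le> 16 * G1 * Ks * (b - a) * (Ce + 1)^2 * B^2" "0 \<le> 24 * G1 * Ks"
        using ba GK G1_nn Ks_nn by (auto intro!: mult_nonneg_nonneg simp: mult.assoc)
      show "1 + 24 * G1 * Ks \<le> Acst" unfolding Acst_def using x by linarith
      show "(b - a) * Ce^2 * B^2 + 16 * G1 * Ks * (b - a) * (Ce + 1)^2 * B^2 \<le> Acst"
        unfolding Acst_def using x by linarith
    qed
    finally show ?thesis by (simp add: distrib_left)
  qed
  finally show ?thesis unfolding \<Phi>_def H_def .
qed

lemma main_raw:
  "2 * (\<Sum>i<N. integral {xL a b N i..xL a b N i + hh a b N}
      (\<lambda>x. poly (Proj k (xL a b N i) (hh a b N) (\<lambda>x. u x t) - U i) x *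
           poly (Proj k (xL a b N i) (hh a b N) (\<lambda>x. Dt u x t) - dU i) x))
   \<le> Acst * ((\<Sum>i<N. integral {xL a b N i..xL a b N i + hh a b N}
      (\<lambda>x. (poly (Proj k (xL a b N i) (hh a b N) (\<lambda>x. u x t) - U i) x)^2)) + hh a b N ^ (2 * k + 2))"
  using main_ineq unfolding n2_def xi_def dxi_def P_def dP_def KL_def h_def .

lemma Acst_nn: "0 \<le> Acst"
proof -
  have "0 \<le> G1 * Ks" using G1_nn Ks_nn by simp
  thus ?thesis unfolding Acst_def using ab G1_nn Ks_nn
    by (auto intro!: add_nonneg_nonneg mult_nonneg_nonneg simp: mult.assoc)
qed

lemma approx_raw: "i < N \<Longrightarrow> xL a b N i \<le> x \<Longrightarrow> x \<le> xL a b N i + hh a b N \<Longrightarrow>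
   \<bar>u x t - poly (Proj k (xL a b N i) (hh a b N) (\<lambda>x. u x t)) x\<bar> \<le> Ce * B * hh a b N ^ Suc k"
  using approx_u unfolding P_def KL_def h_def by blast

end

lemma gronwall:
  fixes Psi Psid :: "real \<Rightarrow> real"
  assumes T: "0 < T" and A: "0 \<le> A"
    and d: "\<forall>s\<in>{0..T}. (Psi has_real_derivative Psid s) (at s within {0..T})"
    and le: "\<forall>s\<in>{0..T}. Psid s \<le> A * Psi s" and t: "t \<in> {0..T}"
  shows "Psi t \<le> Psi 0 * exp (A * t)"
proof -
  define g where "g s = exp (- A * s) * Psi s" for s
  have gd: "(g has_real_derivative exp (- A * s) * (Psid s - A * Psi s)) (at s within {0..T})" if s: "s \<in> {0..T}" for s
  proof -
    have "((\<lambda>s. exp (- A * s)) has_real_derivative exp (- A * s) * (- A)) (at s within {0..T})"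
      by (auto intro!: derivative_eq_intros)
    from DERIV_mult[OF this d[rule_format, OF s]]
    show ?thesis unfolding g_def by (simp add: algebra_simps)
  qed
  have gc: "continuous_on {0..T} g"
  proof (rule continuous_on_eq_continuous_within[THEN iffD2], intro ballI)
    fix s assume "s \<in> {0..T}"
    from gd[OF this] show "continuous (at s within {0..T}) g"
      using has_field_derivative_imp_has_derivative has_derivative_continuous by blast
  qed
  have "g t \<le> g 0"
  proof (cases "t = 0")
    case False
    hence t0: "0 < t" using t by simp
    show ?thesis
    proof (rule DERIV_nonpos_imp_decreasing_open[of 0 t g])
      show "0 \<le> t" using t0 by simp
      show "continuous_on {0..t} g" using gc by (rule continuous_on_subset) (use t in auto)
      fix x assume x: "0 < x" "x < t"
      have xT: "x < T" using x t by simp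
      have "(g has_real_derivative exp (- A * x) * (Psid x - A * Psi x)) (at x)"
        using gd[of x] x xT at_within_Icc_at[of 0 x T] by simp
      moreover have "exp (- A * x) * (Psid x - A * Psi x) \<le> 0"
        using le x xT by (intro mult_nonneg_nonpos) auto
      ultimately show "\<exists>y. (g has_real_derivative y) (at x) \<and> y \<le> 0" by blast
    qed
  qed simp
  hence "exp (- A * t) * Psi t \<le> Psi 0" unfolding g_def by simp
  hence "exp (A * t) * (exp (- A * t) * Psi t) \<le> exp (A * t) * Psi 0" by (intro mult_left_mono) auto
  thus ?thesis by (simp add: exp_minus field_simps)
qed

lemma xy_le: fixes X Y :: real shows "X * Y \<le> X^2 / 2 + Y^2 / 2"
  using zero_le_power2[of "X - Y"] by (simp add: power2_eq_square algebra_simps)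

lemma sq_sum_le: fixes X Y :: real shows "(X + Y)^2 \<le> 2 * X^2 + 2 * Y^2"
  using zero_le_power2[of "X - Y"] by (simp add: power2_eq_square algebra_simps)

lemma init_cell:
  fixes P U :: "real poly" and g :: "real \<Rightarrow> real"
  assumes lr: "l \<le> r" and g: "continuous_on {l..r} g" and d: "degree (P - U) \<le> k"
    and ic: "\<forall>w. degree w \<le> k \<longrightarrow> integral {l..r} (\<lambda>x. poly U x * poly w x) = integral {l..r} (\<lambda>x. g x * poly w x)"
    and e: "\<forall>x\<in>{l..r}. \<bar>g x - poly P x\<bar> \<le> \<epsilon>"
  shows "integral {l..r} (\<lambda>x. (poly (P - U) x)^2) \<le> (r - l) * \<epsilon>^2"
proof -
  define \<xi> where "\<xi> = P - U"
  define I0 where "I0 = integral {l..r} (\<lambda>x. (poly \<xi> x)^2)"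
  define J where "J = integral {l..r} (\<lambda>x. (poly P x - g x)^2)"
  have "I0 = integral {l..r} (\<lambda>x. poly P x * poly \<xi> x - poly U x * poly \<xi> x)"
    unfolding I0_def \<xi>_def by (simp add: power2_eq_square algebra_simps)
  also have "\<dots> = integral {l..r} (\<lambda>x. poly P x * poly \<xi> x) - integral {l..r} (\<lambda>x. poly U x * poly \<xi> x)"
    by (rule integral_diff) (auto intro!: integrable_continuous_interval continuous_intros)
  also have "integral {l..r} (\<lambda>x. poly U x * poly \<xi> x) = integral {l..r} (\<lambda>x. g x * poly \<xi> x)"
    using ic d unfolding \<xi>_def by blast
  also have "integral {l..r} (\<lambda>x. poly P x * poly \<xi> x) - integral {l..r} (\<lambda>x. g x * poly \<xi> x)
      = integral {l..r} (\<lambda>x. (poly P x - g x) * poly \<xi> x)"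
    by (subst integral_diff[symmetric]) (auto intro!: integrable_continuous_interval continuous_intros g simp: algebra_simps)
  also have "\<dots> \<le> integral {l..r} (\<lambda>x. (poly P x - g x)^2 / 2 + (poly \<xi> x)^2 / 2)"
  proof (rule integral_le)
    show "(\<lambda>x. (poly P x - g x) * poly \<xi> x) integrable_on {l..r}"
      by (auto intro!: integrable_continuous_interval continuous_intros g)
    show "(\<lambda>x. (poly P x - g x)^2 / 2 + (poly \<xi> x)^2 / 2) integrable_on {l..r}"
      by (auto intro!: integrable_continuous_interval continuous_intros g)
    fix x
    show "(poly P x - g x) * poly \<xi> x \<le> (poly P x - g x)^2 / 2 + (poly \<xi> x)^2 / 2"
      by (rule xy_le)
  qed
  also have "\<dots> = J / 2 + I0 / 2" unfolding J_def I0_def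
    by (subst integral_add) (auto intro!: integrable_continuous_interval continuous_intros g)
  finally have "I0 \<le> J" by simp
  also have "J \<le> integral {l..r} (\<lambda>x. \<epsilon>^2)" unfolding J_def
  proof (rule integral_le)
    show "(\<lambda>x. (poly P x - g x)^2) integrable_on {l..r}"
      by (auto intro!: integrable_continuous_interval continuous_intros g)
    fix x assume "x \<in> {l..r}"
    hence "\<bar>poly P x - g x\<bar> \<le> \<epsilon>" using e by (simp add: abs_minus_commute)
    thus "(poly P x - g x)^2 \<le> \<epsilon>^2" by (simp add: abs_le_square_iff[symmetric] order_trans[OF abs_ge_zero])
  qed (rule integrable_const_ivl)
  also have "\<dots> = (r - l) * \<epsilon>^2" using lr by simp
  finally show ?thesis unfolding I0_def \<xi>_def .
qed

theorem theorem2p3: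
  fixes a b T c0 C :: real and k :: nat and u :: "real \<Rightarrow> real \<Rightarrow> real"
  assumes "a < b" and "0 < T" and "1 \<le> k" and "0 < c0" and "1 < C"
    and "smooth2 u"
    and "\<forall>x. \<forall>t\<in>{0..T}. Dt u x t + Dx u x t = 0"
    and "\<forall>x t. u (x + (b - a)) t = u x t"
  shows "\<exists>M. \<forall>N::nat. \<forall>uh duh :: real \<Rightarrow> nat \<Rightarrow> real poly.
           1 \<le> N
         \<and> (\<forall>t\<in>{0..T}. \<forall>i<N. degree (uh t i) \<le> k)
         \<and> (\<forall>t\<in>{0..T}. \<forall>i<N. \<forall>j. ((\<lambda>s. coeff (uh s i) j) has_real_derivative coeff (duh t i) j)
                                      (at t within {0..T}))
         \<and> (\<forall>t\<in>{0..T}. \<forall>i<N. \<forall>w. degree w \<le> k \<longrightarrow> noes_eq c0 C k a b N (uh t) (duh t) i w)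
         \<and> (\<forall>i<N. \<forall>w. degree w \<le> k \<longrightarrow>
               integral {xL a b N i .. xR a b N i} (\<lambda>x. poly (uh 0 i) x * poly w x)
             = integral {xL a b N i .. xR a b N i} (\<lambda>x. u x 0 * poly w x))
         \<longrightarrow> (\<forall>t\<in>{0..T}. l2err a b N (\<lambda>x. u x t) (uh t) \<le> M * hh a b N ^ (k + 1))"
proof -
  note ab = assms(1) and T = assms(2) and k1 = assms(3) and c0 = assms(4) and C1 = assms(5)
    and sm = assms(6) and pdeT = assms(7) and per = assms(8)
  obtain Ci where Ci0: "0 < Ci" and INVp: "\<forall>al h (p::real poly) l x. 0 < h \<longrightarrow> degree p \<le> k \<longrightarrow> l \<le> k \<longrightarrow> al \<le> x \<longrightarrow> x \<le> al + h \<longrightarrow>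
        (poly ((pderiv ^^ l) p) x)^2 * h ^ (2 * l + 1) \<le> Ci * integral {al..al + h} (\<lambda>x. (poly p x)^2)"
    using INV[of k] by blast
  obtain Ce where Ce0: "0 < Ce" and E1p: "\<forall>al h fd B x. 0 < h \<longrightarrow> (\<forall>m y. DERIV (fd m) y :> fd (Suc m) y) \<longrightarrow>
        (\<forall>y. al \<le> y \<and> y \<le> al + h \<longrightarrow> \<bar>fd (Suc k) y\<bar> \<le> B) \<longrightarrow> al \<le> x \<longrightarrow> x \<le> al + h \<longrightarrow>
        \<bar>fd 0 x - poly (Proj k al h (fd 0)) x\<bar> \<le> Ce * B * h ^ Suc k"
    using E1[of k] by blast
  obtain B where B0: "0 \<le> B" and Bb: "\<forall>m x t. m \<le> k + 2 \<longrightarrow> a \<le> x \<longrightarrow> x \<le> b \<longrightarrow> 0 \<le> t \<longrightarrow> t \<le> T \<longrightarrow> \<bar>Dn u m x t\<bar> \<le> B"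
    using Dn_bound[OF sm, of "k + 2" a b T] by blast
  define A where "A = Acst a b c0 C k B Ci Ce"
  define E where "E = (b - a) * (Ce * B)^2"
  define M0 where "M0 = 2 * E + 2 * (E + 1) * exp (\<bar>A\<bar> * T)"
  show ?thesis
  proof (intro exI[of _ "sqrt M0"] allI impI ballI)
    fix N :: nat and uh duh :: "real \<Rightarrow> nat \<Rightarrow> real poly" and t :: real
    assume H: "1 \<le> N
         \<and> (\<forall>t\<in>{0..T}. \<forall>i<N. degree (uh t i) \<le> k)
         \<and> (\<forall>t\<in>{0..T}. \<forall>i<N. \<forall>j. ((\<lambda>s. coeff (uh s i) j) has_real_derivative coeff (duh t i) j)
                                      (at t within {0..T}))
         \<and> (\<forall>t\<in>{0..T}. \<forall>i<N. \<forall>w. degree w \<le> k \<longrightarrow> noes_eq c0 C k a b N (uh t) (duh t) i w)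
         \<and> (\<forall>i<N. \<forall>w. degree w \<le> k \<longrightarrow>
               integral {xL a b N i .. xR a b N i} (\<lambda>x. poly (uh 0 i) x * poly w x)
             = integral {xL a b N i .. xR a b N i} (\<lambda>x. u x 0 * poly w x))"
      and t: "t \<in> {0..T}"
    from H have N1: "1 \<le> N" and degU: "\<forall>t\<in>{0..T}. \<forall>i<N. degree (uh t i) \<le> k"
      and dU: "\<forall>t\<in>{0..T}. \<forall>i<N. \<forall>j. ((\<lambda>s. coeff (uh s i) j) has_real_derivative coeff (duh t i) j) (at t within {0..T})"
      and sch: "\<forall>t\<in>{0..T}. \<forall>i<N. \<forall>w. degree w \<le> k \<longrightarrow> noes_eq c0 C k a b N (uh t) (duh t) i w"
      and ic: "\<forall>i<N. \<forall>w. degree w \<le> k \<longrightarrow>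
               integral {xL a b N i .. xR a b N i} (\<lambda>x. poly (uh 0 i) x * poly w x)
             = integral {xL a b N i .. xR a b N i} (\<lambda>x. u x 0 * poly w x)" by blast+
    define h where "h = hh a b N"
    have h0: "0 < h" unfolding h_def using hh_pos[OF ab N1] .
    define Pr where "Pr s i = Proj k (xL a b N i) h (\<lambda>x. u x s)" for s i
    define Prd where "Prd s i = Proj k (xL a b N i) h (\<lambda>x. Dt u x s)" for s i
    define Phi where "Phi s = (\<Sum>i<N. integral {xL a b N i..xL a b N i + h} (\<lambda>x. (poly (Pr s i - uh s i) x)^2))" for s
    define Phid where "Phid s = (\<Sum>i<N. 2 * integral {xL a b N i..xL a b N i + h} (\<lambda>x. poly (Pr s i - uh s i) x * poly (Prd s i - duh s i) x))" for s
    define HH where "HH = h ^ (2 * k + 2)"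
    have pde: "\<forall>x. Dt u x s + Dx u x s = 0" if "s \<in> {0..T}" for s using pdeT that by blast
    have Bs: "\<forall>m x. m \<le> k + 2 \<longrightarrow> a \<le> x \<longrightarrow> x \<le> b \<longrightarrow> \<bar>Dn u m x s\<bar> \<le> B" if "s \<in> {0..T}" for s
      using Bb that by auto
    have degdU: "\<forall>i<N. degree (duh s i) \<le> k" if s: "s \<in> {0..T}" for s
    proof (intro allI impI)
      fix i assume "i < N"
      thus "degree (duh s i) \<le> k"
        using deriv_deg[OF T s, of "\<lambda>s. uh s i" k "duh s i"] degU dU s by blast
    qed
    have degUs: "\<forall>i<N. degree (uh s i) \<le> k" if "s \<in> {0..T}" for s using degU that by blast
    have schs: "\<forall>i<N. \<forall>w. degree w \<le> k \<longrightarrow> noes_eq c0 C k a b N (uh s) (duh s) i w" if "s \<in> {0..T}" for s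
      using sch that by blast
    note ctx = main_raw[OF ab k1 c0 C1 sm pde per N1 degUs degdU schs Bs B0 Ci0 INVp Ce0 E1p]
    note ctxA = Acst_nn[OF ab k1 c0 C1 sm pde per N1 degUs degdU schs Bs B0 Ci0 INVp Ce0 E1p]
    note ctxP = approx_raw[OF ab k1 c0 C1 sm pde per N1 degUs degdU schs Bs B0 Ci0 INVp Ce0 E1p]
    have A0: "0 \<le> A" unfolding A_def using ctxA[of 0] T by force
    have cu: "continuous_on S (\<lambda>x. u x s)" for S s
    proof -
      have c: "continuous_on UNIV (\<lambda>q::real \<times> real. u (fst q) (snd q))" using sm_cont[OF sm, of UNIV "[]"] by simp
      have cp: "continuous_on S (\<lambda>x::real. (x, s))" by (intro continuous_intros)
      show ?thesis using continuous_on_compose2[OF c cp] by simp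
    qed
    have xRh: "xR a b N i = xL a b N i + h" for i unfolding h_def by (rule xR_eq)
    have Phi_d: "(Phi has_real_derivative Phid s) (at s within {0..T})" if s: "s \<in> {0..T}" for s
      unfolding Phi_def Phid_def
    proof (rule DERIV_sum)
      fix i assume "i \<in> {..<N}"
      hence i: "i < N" by simp
      show "((\<lambda>s. integral {xL a b N i..xL a b N i + h} (\<lambda>x. (poly (Pr s i - uh s i) x)^2)) has_real_derivative
          2 * integral {xL a b N i..xL a b N i + h} (\<lambda>x. poly (Pr s i - uh s i) x * poly (Prd s i - duh s i) x))
          (at s within {0..T})"
      proof (rule deriv_int_sq[where k=k])
        show "\<forall>s\<in>{0..T}. degree (Pr s i - uh s i) \<le> k"
          unfolding Pr_def using degU i Proj_deg[OF h0] by (auto intro!: degree_diff_le)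
        show "degree (Prd s i - duh s i) \<le> k"
          unfolding Prd_def using degdU[OF s] i Proj_deg[OF h0] by (auto intro!: degree_diff_le)
        show "\<forall>j. ((\<lambda>s. coeff (Pr s i - uh s i) j) has_real_derivative coeff (Prd s i - duh s i) j) (at s within {0..T})"
        proof
          fix j
          have d1: "((\<lambda>s. coeff (Pr s i) j) has_real_derivative coeff (Prd s i) j) (at s within {0..T})"
            unfolding Pr_def Prd_def by (rule has_field_derivative_at_within[OF Proj_tderiv[OF sm]])
          have d2: "((\<lambda>s. coeff (uh s i) j) has_real_derivative coeff (duh s i) j) (at s within {0..T})"
            using dU s i by blast
          show "((\<lambda>s. coeff (Pr s i - uh s i) j) has_real_derivative coeff (Prd s i - duh s i) j) (at s within {0..T})"
            using DERIV_diff[OF d1 d2] by simp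
        qed
      qed (use s in auto)
    qed
    have Phi_le: "Phid s \<le> A * (Phi s + HH)" if s: "s \<in> {0..T}" for s
    proof -
      have "Phid s = 2 * (\<Sum>i<N. integral {xL a b N i..xL a b N i + h} (\<lambda>x. poly (Pr s i - uh s i) x * poly (Prd s i - duh s i) x))"
        unfolding Phid_def by (simp add: sum_distrib_left)
      also have "\<dots> \<le> A * (Phi s + HH)"
        using ctx[OF s s s s s] unfolding A_def Phi_def HH_def Pr_def Prd_def h_def .
      finally show ?thesis .
    qed
    have Psi_t: "Phi t + HH \<le> (Phi 0 + HH) * exp (A * t)"
    proof (rule gronwall[OF T A0 _ _ t, where Psid=Phid])
      show "\<forall>s\<in>{0..T}. ((\<lambda>s. Phi s + HH) has_real_derivative Phid s) (at s within {0..T})"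
        using Phi_d by (auto intro!: derivative_eq_intros)
      show "\<forall>s\<in>{0..T}. Phid s \<le> A * (Phi s + HH)" using Phi_le by blast
    qed
    define eps where "eps = Ce * B * h ^ Suc k"
    have hpow: "h * eps^2 = Ce^2 * B^2 * (h * HH)"
    proof -
      have "(h ^ Suc k)^2 = HH" unfolding HH_def power_mult[symmetric] by (simp add: mult.commute)
      thus ?thesis unfolding eps_def by (simp add: power_mult_distrib)
    qed
    have Nh: "real N * h = b - a" using N_h[OF N1, of a b] unfolding h_def .
    have NhH: "real N * (h * eps^2) = E * HH"
    proof -
      have "real N * (h * eps^2) = (real N * h) * (Ce^2 * B^2 * HH)" unfolding hpow by (simp only: mult_ac)
      also have "\<dots> = E * HH" unfolding Nh E_def by (simp add: power_mult_distrib mult_ac)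
      finally show ?thesis .
    qed
    have apx: "\<bar>u x s - poly (Pr s i) x\<bar> \<le> eps" if "s \<in> {0..T}" "i < N" "xL a b N i \<le> x" "x \<le> xL a b N i + h" for s i x
      using ctxP[OF that(1) that(1) that(1) that(1) that(1) that(2)] that(3,4) unfolding Pr_def eps_def h_def by blast
    have Phi0: "Phi 0 \<le> E * HH"
    proof -
      have "Phi 0 \<le> (\<Sum>i<N. h * eps^2)"
        unfolding Phi_def
      proof (rule sum_mono)
        fix i assume "i \<in> {..<N}"
        hence i: "i < N" by simp
        have "integral {xL a b N i..xL a b N i + h} (\<lambda>x. (poly (Pr 0 i - uh 0 i) x)^2) \<le> (xL a b N i + h - xL a b N i) * eps^2"
        proof (rule init_cell[where k=k])
          show "xL a b N i \<le> xL a b N i + h" using h0 by simp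
          show "continuous_on {xL a b N i..xL a b N i + h} (\<lambda>x. u x 0)" by (rule cu)
          show "degree (Pr 0 i - uh 0 i) \<le> k"
            unfolding Pr_def using degU i Proj_deg[OF h0] T by (auto intro!: degree_diff_le)
          show "\<forall>w. degree w \<le> k \<longrightarrow> integral {xL a b N i..xL a b N i + h} (\<lambda>x. poly (uh 0 i) x * poly w x)
              = integral {xL a b N i..xL a b N i + h} (\<lambda>x. u x 0 * poly w x)"
            using ic i unfolding xRh by blast
          show "\<forall>x\<in>{xL a b N i..xL a b N i + h}. \<bar>u x 0 - poly (Pr 0 i) x\<bar> \<le> eps"
            using apx[of 0 i] i T by auto
        qed
        thus "integral {xL a b N i..xL a b N i + h} (\<lambda>x. (poly (Pr 0 i - uh 0 i) x)^2) \<le> h * eps^2" by simp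
      qed
      also have "\<dots> = E * HH" using NhH by simp
      finally show ?thesis .
    qed
    have E0: "0 \<le> E" unfolding E_def using ab by simp
    have HH0: "0 \<le> HH" unfolding HH_def using h0 by simp
    have "(\<Sum>i<N. integral {xL a b N i..xR a b N i} (\<lambda>x. (u x t - poly (uh t i) x)^2))
        \<le> (\<Sum>i<N. 2 * (h * eps^2) + 2 * integral {xL a b N i..xL a b N i + h} (\<lambda>x. (poly (Pr t i - uh t i) x)^2))"
    proof (rule sum_mono)
      fix i assume "i \<in> {..<N}"
      hence i: "i < N" by simp
      have "integral {xL a b N i..xL a b N i + h} (\<lambda>x. (u x t - poly (uh t i) x)^2)
          \<le> integral {xL a b N i..xL a b N i + h} (\<lambda>x. 2 * eps^2 + 2 * (poly (Pr t i - uh t i) x)^2)"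
      proof (rule integral_le)
        show "(\<lambda>x. (u x t - poly (uh t i) x)^2) integrable_on {xL a b N i..xL a b N i + h}"
          by (intro integrable_continuous_interval continuous_intros cu)
        show "(\<lambda>x. 2 * eps^2 + 2 * (poly (Pr t i - uh t i) x)^2) integrable_on {xL a b N i..xL a b N i + h}"
          by (intro integrable_continuous_interval continuous_intros)
        fix x assume "x \<in> {xL a b N i..xL a b N i + h}"
        hence ab1: "\<bar>u x t - poly (Pr t i) x\<bar> \<le> eps" using apx[OF t i] by auto
        hence sq1: "(u x t - poly (Pr t i) x)^2 \<le> eps^2"
          by (simp add: abs_le_square_iff[symmetric] order_trans[OF abs_ge_zero])
        have e: "u x t - poly (uh t i) x = (u x t - poly (Pr t i) x) + poly (Pr t i - uh t i) x" by simp
        have "(u x t - poly (uh t i) x)^2 \<le> 2 * (u x t - poly (Pr t i) x)^2 + 2 * (poly (Pr t i - uh t i) x)^2"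
          unfolding e by (rule sq_sum_le)
        thus "(u x t - poly (uh t i) x)^2 \<le> 2 * eps^2 + 2 * (poly (Pr t i - uh t i) x)^2" using sq1 by linarith
      qed
      also have "\<dots> = 2 * (h * eps^2) + 2 * integral {xL a b N i..xL a b N i + h} (\<lambda>x. (poly (Pr t i - uh t i) x)^2)"
        using h0 by (subst integral_add) (auto intro!: integrable_continuous_interval continuous_intros)
      finally show "integral {xL a b N i..xR a b N i} (\<lambda>x. (u x t - poly (uh t i) x)^2)
          \<le> 2 * (h * eps^2) + 2 * integral {xL a b N i..xL a b N i + h} (\<lambda>x. (poly (Pr t i - uh t i) x)^2)"
        unfolding xRh .
    qed
    also have "\<dots> = 2 * (E * HH) + 2 * Phi t"
      unfolding Phi_def using NhH by (simp add: sum.distrib sum_distrib_left[symmetric])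
    also have "\<dots> \<le> 2 * (E * HH) + 2 * ((E * HH + HH) * exp (\<bar>A\<bar> * T))"
    proof -
      have "Phi t \<le> (Phi 0 + HH) * exp (A * t)" using Psi_t HH0 by linarith
      also have "\<dots> \<le> (E * HH + HH) * exp (\<bar>A\<bar> * T)"
      proof (rule mult_mono)
        show "Phi 0 + HH \<le> E * HH + HH" using Phi0 by simp
        show "exp (A * t) \<le> exp (\<bar>A\<bar> * T)" using A0 t by (auto intro!: mult_mono)
        show "0 \<le> E * HH + HH" using E0 HH0 by simp
      qed simp
      finally show ?thesis by simp
    qed
    also have "\<dots> = M0 * HH" unfolding M0_def by (simp add: algebra_simps)
    finally have L2: "(\<Sum>i<N. integral {xL a b N i..xR a b N i} (\<lambda>x. (u x t - poly (uh t i) x)^2)) \<le> M0 * HH" .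
    have "l2err a b N (\<lambda>x. u x t) (uh t) \<le> sqrt (M0 * HH)"
      unfolding l2err_def by (rule real_sqrt_le_mono[OF L2])
    also have "\<dots> = sqrt M0 * h ^ (k + 1)"
    proof -
      have "HH = (h ^ (k + 1))^2" unfolding HH_def power_mult[symmetric] by (simp add: mult.commute)
      thus ?thesis using h0 by (simp add: real_sqrt_mult)
    qed
    finally show "l2err a b N (\<lambda>x. u x t) (uh t) \<le> sqrt M0 * hh a b N ^ (k + 1)" unfolding h_def .
  qed
qed

end
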